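(* Let $\nu,k$ satisfy the structural assumptions in the context and let $\Omega\subset\mathbb{R}^3$ be a bounded $C^2$ domain whose boundary has positive Gaussian curvature. For every $h\in L^2(\Omega\times\mathbb{R}^3)$, $$\|S_\Omega Kh\|_{L^2(\Omega\times\mathbb{R}^3)}\lesssim \operatorname{diam}(\Omega)^{1/2}\|h\|_{L^2(\Omega\times\mathbb{R}^3)}.$$
   Context: Structural assumptions: $\nu:\mathbb{R}^3\to(0,\infty)$ and $k:\mathbb{R}^3\times\mathbb{R}^3\to\mathbb{R}$ satisfy, for some $\rho\in(0,1)$, $\gamma\in[0,1]$, $\nu_0,\nu_1,C>0$: $k(v,v^* )=k(v^*,v)$; $\nu_0(1+|v|)^\gamma\le\nu(v)\le\nu_1(1+|v|)^\gamma$; $|k(v,v^* )|\le \frac{C}{|v-v^*|(1+|v|+|v^*|)^{1-\gamma}}e^{-\frac{1-\rho}{4}(|v-v^*|^2+(\frac{|v|^2-|v^*|^2}{|v-v^*|})^2)}$; $|\nabla_v k(v,v^* )|\le \frac{C(1+|v|)}{|v-v^*|^2(1+|v|+|v^*|)^{1-\gamma}}e^{-\frac{1-\rho}{4}(|v-v^*|^2+(\frac{|v|^2-|v^*|^2}{|v-v^*|})^2)}$; $|\nabla_v\nu(v)|\le C(1+|v|)^{\gamma-1}$. $Kh(x,v)=\int_{\mathbb{R}^3}k(v,v^* )h(x,v^* )dv^*$. $\tau_{x,v}=\inf\{s>0:x-sv\in\Omega^c\}$ and $S_\Omega h(x,v)=\int_0^{\tau_{x,v}}e^{-\nu(v)s}h(x-sv,v)\,ds$.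 $A\lesssim B$ means $A\le cB$ with a constant $c>0$ depending only on $\nu,k$ (not on $\Omega$ or $h$). *)

theory Defs
  imports "HOL-Analysis.Analysis"
begin

type_synonym R3 = "real^3"

definition structural_assms ::
  "(R3 \<Rightarrow> real) \<Rightarrow> (R3 \<Rightarrow> R3 \<Rightarrow> real) \<Rightarrow> real \<Rightarrow> real \<Rightarrow> real \<Rightarrow> real \<Rightarrow> real \<Rightarrow> bool" where
  "structural_assms \<nu> k \<rho> \<gamma> \<nu>0 \<nu>1 C \<longleftrightarrow>
     0 < \<rho> \<and> \<rho> < 1 \<and> 0 \<le> \<gamma> \<and> \<gamma> \<le> 1 \<and> 0 < \<nu>0 \<and> 0 < \<nu>1 \<and> 0 < C \<and>
     (\<forall>v. 0 < \<nu> v) \<and>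
     (\<forall>v w. k v w = k w v) \<and>
     (\<forall>v. \<nu>0 * (1 + norm v) powr \<gamma> \<le> \<nu> v \<and> \<nu> v \<le> \<nu>1 * (1 + norm v) powr \<gamma>) \<and>
     (\<forall>v w. v \<noteq> w \<longrightarrow>
        \<bar>k v w\<bar> \<le> C / (norm (v - w) * (1 + norm v + norm w) powr (1 - \<gamma>)) *
          exp (- ((1 - \<rho>) / 4) * ((norm (v - w))\<^sup>2 + ((((norm v)\<^sup>2 - (norm w)\<^sup>2) / norm (v - w)))\<^sup>2))) \<and>
     (\<forall>v w. v \<noteq> w \<longrightarrow> (\<exists>g. ((\<lambda>u. k u w) has_derivative (\<lambda>z. g \<bullet> z)) (at v) \<and>
        norm g \<le> C * (1 + norm v) / ((norm (v - w))\<^sup>2 * (1 + norm v + norm w) powr (1 - \<gamma>)) *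
          exp (- ((1 - \<rho>) / 4) * ((norm (v - w))\<^sup>2 + ((((norm v)\<^sup>2 - (norm w)\<^sup>2) / norm (v - w)))\<^sup>2)))) \<and>
     (\<forall>v. \<exists>g. (\<nu> has_derivative (\<lambda>z. g \<bullet> z)) (at v) \<and> norm g \<le> C * (1 + norm v) powr (\<gamma> - 1))"

definition C2_defining_function :: "R3 set \<Rightarrow> (R3 \<Rightarrow> real) \<Rightarrow> (R3 \<Rightarrow> R3) \<Rightarrow> (R3 \<Rightarrow> real^3^3) \<Rightarrow> bool" where
  "C2_defining_function \<Omega> \<xi> gr H \<longleftrightarrow>
     (\<forall>x. (\<xi> has_derivative (\<lambda>z. gr x \<bullet> z)) (at x)) \<and>
     (\<forall>x. (gr has_derivative (\<lambda>z. H x *v z)) (at x)) \<and>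
     continuous_on UNIV H \<and>
     \<Omega> = {x. \<xi> x < 0} \<and> frontier \<Omega> = {x. \<xi> x = 0} \<and>
     (\<forall>x\<in>frontier \<Omega>. gr x \<noteq> 0)"

text \<open>Gaussian curvature of the level surface {xi = 0} at x: the determinant of the second
  fundamental form in an orthonormal basis (e1,e2) of the tangent plane, divided by |grad xi|^2.\<close>
definition gauss_curv :: "(R3 \<Rightarrow> R3) \<Rightarrow> (R3 \<Rightarrow> real^3^3) \<Rightarrow> R3 \<Rightarrow> R3 \<Rightarrow> R3 \<Rightarrow> real" where
  "gauss_curv gr H x e1 e2 =
     ((e1 \<bullet> (H x *v e1)) * (e2 \<bullet> (H x *v e2)) - (e1 \<bullet> (H x *v e2)) * (e2 \<bullet> (H x *v e1)))
       / (norm (gr x))\<^sup>2"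

definition bounded_C2_domain_pos_gauss_curv :: "R3 set \<Rightarrow> bool" where
  "bounded_C2_domain_pos_gauss_curv \<Omega> \<longleftrightarrow>
     open \<Omega> \<and> connected \<Omega> \<and> bounded \<Omega> \<and> \<Omega> \<noteq> {} \<and>
     (\<exists>\<xi> gr H. C2_defining_function \<Omega> \<xi> gr H \<and>
        (\<forall>x\<in>frontier \<Omega>. \<forall>e1 e2. norm e1 = 1 \<and> norm e2 = 1 \<and> e1 \<bullet> e2 = 0 \<and>
            e1 \<bullet> gr x = 0 \<and> e2 \<bullet> gr x = 0 \<longrightarrow> gauss_curv gr H x e1 e2 > 0))"

definition Kop :: "(R3 \<Rightarrow> R3 \<Rightarrow> real) \<Rightarrow> (R3 \<Rightarrow> R3 \<Rightarrow> real) \<Rightarrow> R3 \<Rightarrow> R3 \<Rightarrow> real" where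
  "Kop k h x v = (\<integral>w. k v w * h x w \<partial>lebesgue)"

definition exit_time :: "R3 set \<Rightarrow> R3 \<Rightarrow> R3 \<Rightarrow> ereal" where
  "exit_time \<Omega> x v = Inf (ereal ` {s. 0 < s \<and> x - s *\<^sub>R v \<notin> \<Omega>})"

definition S_op :: "R3 set \<Rightarrow> (R3 \<Rightarrow> real) \<Rightarrow> (R3 \<Rightarrow> R3 \<Rightarrow> real) \<Rightarrow> R3 \<Rightarrow> R3 \<Rightarrow> real" where
  "S_op \<Omega> \<nu> f x v =
     (LINT s:{s. 0 < s \<and> ereal s < exit_time \<Omega> x v}|lebesgue. exp (- \<nu> v * s) * f (x - s *\<^sub>R v) v)"

definition L2_on :: "R3 set \<Rightarrow> (R3 \<Rightarrow> R3 \<Rightarrow> real) \<Rightarrow> bool" where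
  "L2_on \<Omega> h \<longleftrightarrow> (\<lambda>(x,v). h x v) \<in> borel_measurable (lebesgue_on (\<Omega> \<times> UNIV)) \<and>
     integrable (lebesgue_on (\<Omega> \<times> UNIV)) (\<lambda>(x,v). (h x v)\<^sup>2)"

definition L2_norm_on :: "R3 set \<Rightarrow> (R3 \<Rightarrow> R3 \<Rightarrow> real) \<Rightarrow> real" where
  "L2_norm_on \<Omega> h = sqrt (\<integral>p. (case p of (x,v) \<Rightarrow> (h x v)\<^sup>2) \<partial>lebesgue_on (\<Omega> \<times> UNIV))"

end

theory Submission
  imports Defs
begin


lemma emeasure_ball3: "r \<ge> 0 \<Longrightarrow> emeasure lborel (ball (0::real^3) r) = ennreal (4/3 * r^3 * pi)"
  using sphere_volume[of r 0] emeasure_eq_ennreal_measure[of lborel "ball (0::real^3) r"]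
    emeasure_lborel_ball_finite[of "0::real^3" r] by (simp add: less_top)

lemma ennreal_term_le_suminf: "(f i :: ennreal) \<le> (\<Sum>n. f n)"
  using sum_le_suminf[OF summableI, of "{i}" f] by simp

lemma pred_ball_borel[measurable]: "Measurable.pred borel (\<lambda>x. x \<in> ball (c::'a::metric_space) r)"
  using borel_open[OF open_ball, of c r] unfolding pred_def by (simp add: ball_def)

lemma two_pow_sq: "(2::real)^M * 2^M = 4^M"
  by (simp flip: power_mult_distrib)

lemma four_pow: "(4::real)^n = 2^(2*n)" by (simp add: power_mult)
lemma sixteen_pow: "(16::real)^n = 2^(4*n)" by (simp add: power_mult)

definition psi3 :: "real^3 \<Rightarrow> real" where
  "psi3 z = (if norm z < 1 then 1 / (norm z)^2 else 1 / (norm z)^4)"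

lemma psi3_bound:
  "ennreal (psi3 z) \<le> (\<Sum>n. ennreal (4^(n+1)) * indicator (ball 0 ((1/2)^n)) z)
     + (\<Sum>n. ennreal ((1/16)^n) * indicator (ball 0 (2^(n+1))) z)"
proof (cases "z = 0")
  case True then show ?thesis by (simp add: psi3_def)
next
  case False
  define r where "r = norm z"
  have r: "r > 0" using False by (simp add: r_def)
  show ?thesis
  proof (cases "r < 1")
    case True
    have ex: "\<exists>m. (1/2::real)^m \<le> r"
      using real_arch_pow_inv[of r "1/2"] r by (auto intro: less_imp_le)
    define N where "N = (LEAST m. (1/2::real)^m \<le> r)"
    have N1: "(1/2::real)^N \<le> r" unfolding N_def by (rule LeastI_ex[OF ex])
    have N0: "N \<noteq> 0"
    proof
      assume "N = 0" then show False using N1 True by simp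
    qed
    then obtain M where M: "N = Suc M" by (cases N) auto
    have "\<not> (1/2::real)^M \<le> r" using not_less_Least[of M "\<lambda>m. (1/2::real)^m \<le> r"] M N_def by auto
    hence rM: "r < (1/2)^M" by simp
    have "psi3 z = 1 / r^2" using True by (simp add: psi3_def r_def)
    also have "\<dots> \<le> 1 / ((1/2)^N)^2"
      using N1 r by (intro divide_left_mono power_mono) auto
    also have "\<dots> = 4^(M+1)" using M by (simp add: power_mult_distrib field_simps power2_eq_square two_pow_sq flip: power_mult)
    finally have "ennreal (psi3 z) \<le> ennreal (4^(M+1)) * indicator (ball 0 ((1/2)^M)) z"
      using rM by (simp add: r_def indicator_def ennreal_leI)
    also have "\<dots> \<le> (\<Sum>n. ennreal (4^(n+1)) * indicator (ball 0 ((1/2)^n)) z)"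
      by (rule ennreal_term_le_suminf)
    finally show ?thesis by (rule order_trans) (rule add_increasing2, auto)
  next
    case False
    have ex: "\<exists>m. r < (2::real)^(m+1)"
    proof -
      obtain n where "r < (2::real)^n" using real_arch_pow[of 2 r] by auto
      then have "r < 2^(n+1)" by (smt (verit) one_le_numeral power_increasing le_add1)
      then show ?thesis by blast
    qed
    define N where "N = (LEAST m. r < (2::real)^(m+1))"
    have N1: "r < (2::real)^(N+1)" unfolding N_def by (rule LeastI_ex[OF ex])
    have N2: "(2::real)^N \<le> r"
    proof (cases N)
      case 0 then show ?thesis using False by simp
    next
      case (Suc M)
      have "\<not> r < (2::real)^(M+1)" using not_less_Least[of M "\<lambda>m. r < (2::real)^(m+1)"] Suc N_def by auto
      then show ?thesis using Suc by simp
    qed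
    have "psi3 z = 1 / r^4" using False by (simp add: psi3_def r_def)
    also have "\<dots> \<le> 1 / ((2::real)^N)^4"
      using N2 r by (intro divide_left_mono power_mono) auto
    also have "\<dots> = (1/16)^N"
    proof -
      have "((2::real)^N)^4 = (2^4)^N" by (simp only: power_mult[symmetric] mult.commute)
      then show ?thesis by (simp add: power_one_over)
    qed
    finally have "ennreal (psi3 z) \<le> ennreal ((1/16)^N) * indicator (ball 0 (2^(N+1))) z"
      using N1 by (simp add: r_def indicator_def ennreal_leI)
    also have "\<dots> \<le> (\<Sum>n. ennreal ((1/16)^n) * indicator (ball 0 (2^(n+1))) z)"
      by (rule ennreal_term_le_suminf)
    finally show ?thesis by (rule order_trans) (rule add_increasing, auto)
  qed
qed

lemma psi3_integral_finite: "(\<integral>\<^sup>+ z. ennreal (psi3 z) \<partial>lborel) < \<infinity>"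
proof -
  have "(\<integral>\<^sup>+ z. ennreal (psi3 z) \<partial>lborel) \<le> (\<integral>\<^sup>+ z. (\<Sum>n. ennreal (4^(n+1)) * indicator (ball 0 ((1/2)^n)) z)
     + (\<Sum>n. ennreal ((1/16)^n) * indicator (ball (0::real^3) (2^(n+1))) z) \<partial>lborel)"
    by (intro nn_integral_mono psi3_bound)
  also have "\<dots> = (\<Sum>n. ennreal (4^(n+1)) * emeasure lborel (ball (0::real^3) ((1/2)^n)))
     + (\<Sum>n. ennreal ((1/16)^n) * emeasure lborel (ball (0::real^3) (2^(n+1))))"
    apply (subst nn_integral_add)
      apply measurable[2]
    apply (subst (1 2) nn_integral_suminf)
      apply measurable[2]
    apply (simp add: nn_integral_cmult_indicator)
    done
  also have "\<dots> = (\<Sum>n. ennreal (16/3*pi*(1/2)^n)) + (\<Sum>n. ennreal (32/3*pi*(1/2)^n))"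
    apply (simp add: emeasure_ball3 ennreal_mult'[symmetric])
    apply (intro arg_cong2[where f="(+)"] suminf_cong arg_cong[where f=ennreal])
     apply (simp_all add: power_mult_distrib field_simps flip: power_mult)
     apply (simp_all add: four_pow sixteen_pow mult.commute flip: power_add)
    done
  also have "\<dots> < \<infinity>"
    by (subst suminf_ennreal2, simp, intro summable_mult summable_geometric, simp)+ simp
  finally show ?thesis .
qed


definition gk :: "real \<Rightarrow> real^3 \<Rightarrow> real" where
  "gk a z = exp (- a * (norm z)^2) / norm z"
definition g2 :: "real \<Rightarrow> real^3 \<Rightarrow> real" where
  "g2 a z = exp (- a * (norm z)^2) / (norm z)^2"

lemma gk_nonneg: "0 \<le> gk a z" by (simp add: gk_def)
lemma g2_nonneg: "0 \<le> g2 a z" by (simp add: g2_def)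

lemma borel_gk[measurable]: "gk a \<in> borel_measurable borel"
  unfolding gk_def by measurable
lemma borel_g2[measurable]: "g2 a \<in> borel_measurable borel"
  unfolding g2_def by measurable

lemma exp_neg_le: "(x::real) > 0 \<Longrightarrow> exp (- x) \<le> 4 / x^2"
proof -
  assume x: "x > 0"
  have "x / 2 \<le> exp (x/2)" using exp_ge_add_one_self[of "x/2"] by linarith
  then have "(x/2)^2 \<le> exp (x/2) ^ 2" using x by (intro power_mono) auto
  also have "\<dots> = exp x" by (simp flip: exp_of_nat_mult)
  finally have "x^2 / 4 \<le> exp x" by (simp add: power_divide)
  then show ?thesis using x by (simp add: exp_minus field_simps)
qed

lemma far_bound:
  fixes a r :: real
  assumes a: "a > 0" and r: "r \<ge> 1"
  shows "exp (- a * r^2) \<le> (4 / a^2) * (1 / r^4)"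
proof -
  have "exp (- a * r^2) = exp (- (a * r^2))" by simp
  also have "\<dots> \<le> 4 / (a * r^2)^2" using a r by (intro exp_neg_le mult_pos_pos) auto
  also have "\<dots> = (4 / a^2) * (1 / r^4)" by (simp add: power_mult_distrib field_simps flip: power_mult)
  finally show ?thesis .
qed

lemma g2_le_psi3: assumes a: "a > 0" shows "g2 a z \<le> max 1 (4/a^2) * psi3 z"
proof (cases "norm z < 1")
  case True
  have "g2 a z \<le> 1 / (norm z)^2" unfolding g2_def using a by (intro divide_right_mono) auto
  also have "\<dots> \<le> max 1 (4/a^2) * psi3 z" using True
    by (simp add: psi3_def) (rule divide_right_mono, auto)
  finally show ?thesis .
next
  case False
  have "g2 a z \<le> exp (- a * (norm z)^2)" unfolding g2_def using False
    by (simp add: divide_le_eq)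
  also have "\<dots> \<le> (4 / a^2) * (1 / (norm z)^4)" using far_bound[OF a] False by simp
  also have "\<dots> \<le> max 1 (4/a^2) * (1 / (norm z)^4)"
    by (rule mult_right_mono) auto
  also have "\<dots> = max 1 (4/a^2) * psi3 z" using False by (simp add: psi3_def)
  finally show ?thesis .
qed

lemma gk_le_psi3: assumes a: "a > 0" shows "gk a z \<le> max 1 (4/a^2) * psi3 z"
proof (cases "norm z < 1")
  case True
  have "gk a z \<le> 1 / norm z" unfolding gk_def using a by (intro divide_right_mono) auto
  also have "\<dots> \<le> 1 / (norm z)^2" using True
    by (cases "z = 0") (auto simp: power2_eq_square divide_simps mult_le_cancel_left1)
  also have "\<dots> \<le> max 1 (4/a^2) * psi3 z" using True
    by (simp add: psi3_def) (rule divide_right_mono, auto)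
  finally show ?thesis .
next
  case False
  have "gk a z \<le> exp (- a * (norm z)^2)" unfolding gk_def using False
    by (simp add: divide_le_eq)
  also have "\<dots> \<le> (4 / a^2) * (1 / (norm z)^4)" using far_bound[OF a] False by simp
  also have "\<dots> \<le> max 1 (4/a^2) * (1 / (norm z)^4)"
    by (rule mult_right_mono) auto
  also have "\<dots> = max 1 (4/a^2) * psi3 z" using False by (simp add: psi3_def)
  finally show ?thesis .
qed

lemma psi3_nonneg: "0 \<le> psi3 z" by (simp add: psi3_def)

lemma finite_by_psi3:
  assumes "\<And>z. 0 \<le> f z" "\<And>z. f z \<le> B * psi3 z"
  shows "(\<integral>\<^sup>+ z. ennreal (f z) \<partial>lborel) < \<infinity>"
proof -
  have "(\<integral>\<^sup>+ z. ennreal (f z) \<partial>lborel) \<le> (\<integral>\<^sup>+ z. ennreal B * ennreal (psi3 z) \<partial>lborel)"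
    using assms by (intro nn_integral_mono) (metis ennreal_leI ennreal_mult'' psi3_nonneg)
  also have "\<dots> = ennreal B * (\<integral>\<^sup>+ z. ennreal (psi3 z) \<partial>lborel)"
    by (rule nn_integral_cmult) (simp add: psi3_def)
  also have "\<dots> < \<infinity>" using psi3_integral_finite by (simp add: ennreal_mult_less_top)
  finally show ?thesis .
qed

lemma gk_int_finite: "a > 0 \<Longrightarrow> (\<integral>\<^sup>+ z. ennreal (gk a z) \<partial>lborel) < \<infinity>"
  by (rule finite_by_psi3[OF gk_nonneg gk_le_psi3])
lemma g2_int_finite: "a > 0 \<Longrightarrow> (\<integral>\<^sup>+ z. ennreal (g2 a z) \<partial>lborel) < \<infinity>"
  by (rule finite_by_psi3[OF g2_nonneg g2_le_psi3])

lemma nn_integral_translate: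
  fixes f :: "'a::euclidean_space \<Rightarrow> ennreal"
  assumes [measurable]: "f \<in> borel_measurable borel"
  shows "(\<integral>\<^sup>+ v. f (v - w) \<partial>lborel) = (\<integral>\<^sup>+ v. f v \<partial>lborel)"
proof -
  have "(\<integral>\<^sup>+ v. f v \<partial>lborel) = (\<integral>\<^sup>+ v. f v \<partial>distr lborel borel ((+) (- w)))"
    by (simp add: lborel_distr_plus)
  also have "\<dots> = (\<integral>\<^sup>+ v. f (- w + v) \<partial>lborel)"
    by (subst nn_integral_distr) auto
  finally show ?thesis by simp
qed

lemma J_pointwise:
  assumes a: "a > 0"
  shows "1 / norm v * gk a (v - w) \<le> g2 a v + g2 a (v - w)"
proof (cases "v = 0 \<or> v = w")
  case True then show ?thesis by (auto simp: gk_def g2_nonneg add_nonneg_nonneg)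
next
  case False
  then have v: "norm v > 0" and vw: "norm (v - w) > 0" by auto
  have eq: "1 / norm v * gk a (v - w) = exp (- a * (norm (v-w))^2) * (1 / (norm v * norm (v - w)))"
    by (simp add: gk_def)
  show ?thesis
  proof (cases "norm v \<le> norm (v - w)")
    case True
    have "exp (- a * (norm (v-w))^2) * (1 / (norm v * norm (v - w))) \<le> exp (- a * (norm v)^2) * (1 / (norm v)^2)"
      using True v vw a by (intro mult_mono) (auto simp: power2_eq_square intro!: divide_left_mono mult_left_mono mult_mono)
    also have "\<dots> = g2 a v" by (simp add: g2_def)
    finally show ?thesis using eq g2_nonneg[of a "v - w"] by linarith
  next
    case False
    have "exp (- a * (norm (v-w))^2) * (1 / (norm v * norm (v - w))) \<le> exp (- a * (norm (v-w))^2) * (1 / (norm (v-w))^2)"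
      using False v vw a by (intro mult_mono) (auto simp: power2_eq_square intro!: divide_left_mono mult_right_mono)
    also have "\<dots> = g2 a (v - w)" by (simp add: g2_def)
    finally show ?thesis using eq g2_nonneg[of a v] by linarith
  qed
qed

lemma J_bound:
  assumes a: "a > 0"
  shows "(\<integral>\<^sup>+ v. ennreal (1 / norm v * gk a (v - w)) \<partial>lborel) \<le> 2 * (\<integral>\<^sup>+ z. ennreal (g2 a z) \<partial>lborel)"
proof -
  have "(\<integral>\<^sup>+ v. ennreal (1 / norm v * gk a (v - w)) \<partial>lborel) \<le> (\<integral>\<^sup>+ v. ennreal (g2 a v) + ennreal (g2 a (v - w)) \<partial>lborel)"
    using J_pointwise[OF a] by (intro nn_integral_mono) (simp add: g2_nonneg flip: ennreal_plus)
  also have "\<dots> = (\<integral>\<^sup>+ v. ennreal (g2 a v) \<partial>lborel) + (\<integral>\<^sup>+ v. ennreal (g2 a (v - w)) \<partial>lborel)"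
    by (rule nn_integral_add) auto
  also have "(\<integral>\<^sup>+ v. ennreal (g2 a (v - w)) \<partial>lborel) = (\<integral>\<^sup>+ v. ennreal (g2 a v) \<partial>lborel)"
    by (rule nn_integral_translate[where f="\<lambda>z. ennreal (g2 a z)"]) measurable
  finally show ?thesis by (simp add: mult_2)
qed


lemma sa_basic:
  assumes "structural_assms \<nu> k \<rho> \<gamma> \<nu>0 \<nu>1 C"
  shows "0 < \<rho>" "\<rho> < 1" "0 \<le> \<gamma>" "\<gamma> \<le> 1" "0 < \<nu>0" "0 < C" "\<And>v. \<nu>0 \<le> \<nu> v"
    "\<And>v w. k v w = k w v"
proof -
  show "0 < \<rho>" "\<rho> < 1" "0 \<le> \<gamma>" "\<gamma> \<le> 1" "0 < \<nu>0" "0 < C" "\<And>v w. k v w = k w v"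
    using assms unfolding structural_assms_def by auto
  fix v
  have "\<nu>0 * (1 + norm v) powr \<gamma> \<le> \<nu> v" using assms unfolding structural_assms_def by auto
  moreover have "1 \<le> (1 + norm v) powr \<gamma>" using assms unfolding structural_assms_def
    by (intro ge_one_powr_ge_zero) auto
  moreover have "0 < \<nu>0" using assms unfolding structural_assms_def by auto
  ultimately show "\<nu>0 \<le> \<nu> v" by (smt (verit) mult_le_cancel_left1)
qed

lemma sa_k_bound:
  assumes sa: "structural_assms \<nu> k \<rho> \<gamma> \<nu>0 \<nu>1 C" and vw: "v \<noteq> w"
  shows "\<bar>k v w\<bar> \<le> C * gk ((1 - \<rho>)/4) (v - w)"
proof -
  let ?a = "(1 - \<rho>)/4"
  let ?n = "norm (v - w)"
  let ?P = "(1 + norm v + norm w) powr (1 - \<gamma>)"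
  let ?Y = "(((norm v)\<^sup>2 - (norm w)\<^sup>2) / norm (v - w))\<^sup>2"
  have k: "\<bar>k v w\<bar> \<le> C / (?n * ?P) * exp (- ?a * (?n\<^sup>2 + ?Y))"
    using sa vw unfolding structural_assms_def by blast
  have a: "?a > 0" "C > 0" "\<gamma> \<le> 1" using sa unfolding structural_assms_def by auto
  have P: "1 \<le> ?P" using a by (intro ge_one_powr_ge_zero) auto
  have n: "?n > 0" using vw by simp
  have "C / (?n * ?P) \<le> C / ?n" using P n a by (intro divide_left_mono) (auto intro!: mult_pos_pos simp: order.strict_trans2[OF zero_less_one P])
  moreover have "exp (- ?a * (?n\<^sup>2 + ?Y)) \<le> exp (- ?a * ?n\<^sup>2)"
  proof -
    have "?a * ?n\<^sup>2 \<le> ?a * (?n\<^sup>2 + ?Y)" using a by (intro mult_left_mono) auto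
    then show ?thesis by simp
  qed
  ultimately have "C / (?n * ?P) * exp (- ?a * (?n\<^sup>2 + ?Y)) \<le> C / ?n * exp (- ?a * ?n\<^sup>2)"
    using a n by (intro mult_mono) auto
  then show ?thesis using k by (simp add: gk_def)
qed

lemma sa_grad:
  assumes sa: "structural_assms \<nu> k \<rho> \<gamma> \<nu>0 \<nu>1 C" and vw: "v \<noteq> w"
  shows "\<exists>g. ((\<lambda>u. k u w) has_derivative (\<lambda>z. g \<bullet> z)) (at v) \<and> norm g \<le> C * (1 + norm v) / (norm (v - w))\<^sup>2"
proof -
  let ?a = "(1 - \<rho>)/4"
  let ?n = "norm (v - w)"
  let ?P = "(1 + norm v + norm w) powr (1 - \<gamma>)"
  let ?Y = "(((norm v)\<^sup>2 - (norm w)\<^sup>2) / norm (v - w))\<^sup>2"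
  obtain g where g: "((\<lambda>u. k u w) has_derivative (\<lambda>z. g \<bullet> z)) (at v)"
    "norm g \<le> C * (1 + norm v) / (?n\<^sup>2 * ?P) * exp (- ?a * (?n\<^sup>2 + ?Y))"
    using sa vw unfolding structural_assms_def by blast
  have a: "?a > 0" "C > 0" "\<gamma> \<le> 1" using sa unfolding structural_assms_def by auto
  have P: "1 \<le> ?P" using a by (intro ge_one_powr_ge_zero) auto
  have n: "?n > 0" using vw by simp
  have "C * (1 + norm v) / (?n\<^sup>2 * ?P) \<le> C * (1 + norm v) / ?n\<^sup>2" using P n a
    by (intro divide_left_mono) (auto intro!: mult_pos_pos simp: order.strict_trans2[OF zero_less_one P])
  moreover have "exp (- ?a * (?n\<^sup>2 + ?Y)) \<le> 1"
  proof -
    have "0 \<le> ?a * (?n\<^sup>2 + ?Y)" using a by (intro mult_nonneg_nonneg) auto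
    then show ?thesis by simp
  qed
  ultimately have "C * (1 + norm v) / (?n\<^sup>2 * ?P) * exp (- ?a * (?n\<^sup>2 + ?Y)) \<le> C * (1 + norm v) / ?n\<^sup>2"
    using a n by (intro order.trans[OF mult_right_le_one_le]) auto
  then show ?thesis using g by force
qed


lemma sa_k_lip:
  assumes sa: "structural_assms \<nu> k \<rho> \<gamma> \<nu>0 \<nu>1 C"
    and d: "0 < \<delta>" and v: "v \<in> ball v0 \<delta>" and w: "\<And>u. u \<in> ball v0 \<delta> \<Longrightarrow> \<delta> \<le> norm (u - w)"
  shows "\<bar>k v w - k v0 w\<bar> \<le> C * (1 + norm v0 + \<delta>) / \<delta>\<^sup>2 * norm (v - v0)"
proof -
  define G where "G u = (SOME g. ((\<lambda>u. k u w) has_derivative (\<lambda>z. g \<bullet> z)) (at u) \<and> norm g \<le> C * (1 + norm u) / (norm (u - w))\<^sup>2)" for u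
  have C: "C > 0" using sa_basic[OF sa] by auto
  have G: "((\<lambda>u. k u w) has_derivative (\<lambda>z. G u \<bullet> z)) (at u) \<and> norm (G u) \<le> C * (1 + norm u) / (norm (u - w))\<^sup>2"
    if "u \<in> ball v0 \<delta>" for u
  proof -
    have "u \<noteq> w" using w[OF that] d by auto
    from someI_ex[OF sa_grad[OF sa this]] show ?thesis unfolding G_def .
  qed
  have "norm (k v w - k v0 w) \<le> C * (1 + norm v0 + \<delta>) / \<delta>\<^sup>2 * norm (v - v0)"
  proof (rule differentiable_bound[where S="ball v0 \<delta>" and f'="\<lambda>u z. G u \<bullet> z"])
    show "convex (ball v0 \<delta>)" by simp
    show "((\<lambda>u. k u w) has_derivative (\<lambda>z. G u \<bullet> z)) (at u within ball v0 \<delta>)" if "u \<in> ball v0 \<delta>" for u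
      using G[OF that] by (auto intro: has_derivative_at_withinI)
    show "onorm (\<lambda>z. G u \<bullet> z) \<le> C * (1 + norm v0 + \<delta>) / \<delta>\<^sup>2" if u: "u \<in> ball v0 \<delta>" for u
    proof -
      have "onorm (\<lambda>z. G u \<bullet> z) \<le> norm (G u)"
        by (rule onorm_le) (simp add: Cauchy_Schwarz_ineq2)
      also have "\<dots> \<le> C * (1 + norm u) / (norm (u - w))\<^sup>2" using G[OF u] by simp
      also have "\<dots> \<le> C * (1 + norm v0 + \<delta>) / \<delta>\<^sup>2"
      proof (intro frac_le mult_left_mono power_mono)
        show "1 + norm u \<le> 1 + norm v0 + \<delta>" using u norm_triangle_ineq2[of u v0]
          by (auto simp: dist_norm norm_minus_commute)
      qed (use C d w[OF u] in auto)
      finally show ?thesis .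
    qed
  qed (use v d in auto)
  then show ?thesis by simp
qed

lemma sa_k_cont:
  assumes sa: "structural_assms \<nu> k \<rho> \<gamma> \<nu>0 \<nu>1 C"
  shows "continuous_on {p. fst p \<noteq> snd p} (\<lambda>p. k (fst p) (snd p))"
proof -
  have op: "open {p::R3\<times>R3. fst p \<noteq> snd p}"
  proof -
    have "{p::R3\<times>R3. fst p \<noteq> snd p} = - {p. fst p = snd p}" by auto
    moreover have "closed {p::R3\<times>R3. fst p = snd p}"
      by (intro closed_Collect_eq continuous_intros)
    ultimately show ?thesis by (simp add: open_Compl)
  qed
  show ?thesis
  proof (subst continuous_on_eq_continuous_at[OF op], safe)
    fix v0 w0 :: R3 assume ne: "fst (v0, w0) \<noteq> snd (v0, w0)"
    then have ne: "v0 \<noteq> w0" by simp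
    define \<delta> where "\<delta> = dist v0 w0 / 3"
    have d: "\<delta> > 0" using ne by (simp add: \<delta>_def)
    define L where "L = C * (1 + norm v0 + \<delta>) / \<delta>\<^sup>2"
    have lip: "\<bar>k v w - k v0 w\<bar> \<le> L * norm (v - v0)" if "v \<in> ball v0 \<delta>" "w \<in> ball w0 \<delta>" for v w
      unfolding L_def
    proof (rule sa_k_lip[OF sa d that(1)])
      fix u assume "u \<in> ball v0 \<delta>"
      then show "\<delta> \<le> norm (u - w)" using that(2) dist_triangle[of v0 w0 u] dist_triangle[of u w0 w]
        by (auto simp: \<delta>_def dist_norm norm_minus_commute)
    qed
    have c2: "isCont (\<lambda>w. k v0 w) w0"
    proof -
      obtain g where "((\<lambda>u. k u v0) has_derivative (\<lambda>z. g \<bullet> z)) (at w0)"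
        using sa_grad[OF sa, of w0 v0] ne by auto
      then have "isCont (\<lambda>u. k u v0) w0" by (rule has_derivative_continuous)
      moreover have "(\<lambda>u. k u v0) = (\<lambda>w. k v0 w)" using sa_basic(8)[OF sa] by auto
      ultimately show ?thesis by simp
    qed
    have t1: "((\<lambda>p. k (fst p) (snd p) - k v0 (snd p)) \<longlongrightarrow> 0) (at (v0, w0))"
    proof (rule Lim_null_comparison)
      have "eventually (\<lambda>p. p \<in> ball v0 \<delta> \<times> ball w0 \<delta>) (at (v0, w0))"
        using d by (intro eventually_at_in_open') (auto intro: open_Times)
      then show "eventually (\<lambda>p. norm (k (fst p) (snd p) - k v0 (snd p)) \<le> L * norm (fst p - v0)) (at (v0, w0))"
        by eventually_elim (use lip in auto)
      have "((\<lambda>p. L * norm (fst p - v0)) \<longlongrightarrow> L * norm (fst (v0,w0) - v0)) (at (v0, w0))"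
        by (intro tendsto_intros)
      then show "((\<lambda>p. L * norm (fst p - v0)) \<longlongrightarrow> 0) (at (v0, w0))" by simp
    qed
    have t2: "((\<lambda>p. k v0 (snd p)) \<longlongrightarrow> k v0 w0) (at (v0, w0))"
    proof -
      have "((\<lambda>p. snd p) \<longlongrightarrow> snd (v0,w0)) (at (v0, w0))" by (intro tendsto_intros)
      then show ?thesis using c2 isCont_tendsto_compose[OF c2] by auto
    qed
    have "((\<lambda>p. (k (fst p) (snd p) - k v0 (snd p)) + k v0 (snd p)) \<longlongrightarrow> 0 + k v0 w0) (at (v0, w0))"
      by (intro tendsto_add t1 t2)
    then show "isCont (\<lambda>p. k (fst p) (snd p)) (v0, w0)"
      unfolding isCont_def by simp
  qed
qed


lemma ennreal_abs_integral_le: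
  fixes f :: "'a \<Rightarrow> real"
  shows "ennreal \<bar>integral\<^sup>L M f\<bar> \<le> (\<integral>\<^sup>+x. ennreal \<bar>f x\<bar> \<partial>M)"
proof (cases "integrable M f")
  case True
  then show ?thesis using integral_norm_bound_ennreal[OF True] by simp
next
  case False
  then show ?thesis by (simp add: not_integrable_integral_eq)
qed

lemma CS_weighted:
  fixes w f :: "'a \<Rightarrow> real"
  assumes [measurable]: "w \<in> borel_measurable M" "f \<in> borel_measurable M" and w: "\<And>x. 0 \<le> w x"
  shows "(\<integral>\<^sup>+x. ennreal (w x * \<bar>f x\<bar>) \<partial>M)\<^sup>2 \<le> (\<integral>\<^sup>+x. ennreal (w x) \<partial>M) * (\<integral>\<^sup>+x. ennreal (w x * (f x)\<^sup>2) \<partial>M)"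
proof -
  have "(\<integral>\<^sup>+x. ennreal (w x * \<bar>f x\<bar>) \<partial>M) = (\<integral>\<^sup>+x. ennreal (sqrt (w x)) * ennreal (sqrt (w x) * \<bar>f x\<bar>) \<partial>M)"
  proof (intro nn_integral_cong)
    fix x
    have e1: "sqrt (w x) * (sqrt (w x) * \<bar>f x\<bar>) = w x * \<bar>f x\<bar>" using w[of x]
      by (simp flip: mult.assoc)
    have e2: "ennreal (sqrt (w x)) * ennreal (sqrt (w x) * \<bar>f x\<bar>) = ennreal (sqrt (w x) * (sqrt (w x) * \<bar>f x\<bar>))"
      by (rule ennreal_mult[symmetric]) (auto simp: w)
    show "ennreal (w x * \<bar>f x\<bar>) = ennreal (sqrt (w x)) * ennreal (sqrt (w x) * \<bar>f x\<bar>)"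
      by (simp only: e1 e2)
  qed
  also have "(\<dots>)\<^sup>2 \<le> (\<integral>\<^sup>+x. ennreal (sqrt (w x)) ^ 2 \<partial>M) * (\<integral>\<^sup>+x. ennreal (sqrt (w x) * \<bar>f x\<bar>) ^ 2 \<partial>M)"
    by (rule Cauchy_Schwarz_nn_integral) measurable
  also have "(\<integral>\<^sup>+x. ennreal (sqrt (w x)) ^ 2 \<partial>M) = (\<integral>\<^sup>+x. ennreal (w x) \<partial>M)"
    using w by (simp add: ennreal_power)
  also have "(\<integral>\<^sup>+x. ennreal (sqrt (w x) * \<bar>f x\<bar>) ^ 2 \<partial>M) = (\<integral>\<^sup>+x. ennreal (w x * (f x)\<^sup>2) \<partial>M)"
    using w by (simp add: ennreal_power power_mult_distrib)
  finally show ?thesis .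
qed

lemma gk_commute: "gk a (v - w) = gk a (w - v)"
  by (simp add: gk_def norm_minus_commute)

lemma F0_bound:
  fixes h0 k0 :: "R3 \<times> R3 \<Rightarrow> real"
  assumes [measurable]: "h0 \<in> borel_measurable (borel \<Otimes>\<^sub>M borel)" "k0 \<in> borel_measurable (borel \<Otimes>\<^sub>M borel)"
    and kb: "\<And>v w. \<bar>k0 (v,w)\<bar> \<le> C * gk a (v - w)" and C: "C \<ge> 0"
  shows "ennreal ((\<integral>w. k0 (v,w) * h0 (y,w) \<partial>lborel)^2) \<le> ennreal C * (\<integral>\<^sup>+z. ennreal (gk a z) \<partial>lborel) * (\<integral>\<^sup>+w. ennreal (C * gk a (v - w) * (h0 (y,w))^2) \<partial>lborel)"
proof -
  let ?F = "\<integral>w. k0 (v,w) * h0 (y,w) \<partial>lborel"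
  have "ennreal (?F^2) = (ennreal \<bar>?F\<bar>)^2" by (simp add: ennreal_power)
  also have "\<dots> \<le> (\<integral>\<^sup>+w. ennreal \<bar>k0 (v,w) * h0 (y,w)\<bar> \<partial>lborel)^2"
    by (intro power_mono ennreal_abs_integral_le) simp
  also have "\<dots> = (\<integral>\<^sup>+w. ennreal (\<bar>k0 (v,w)\<bar> * \<bar>h0 (y,w)\<bar>) \<partial>lborel)^2"
    by (simp add: abs_mult)
  also have "\<dots> \<le> (\<integral>\<^sup>+w. ennreal \<bar>k0 (v,w)\<bar> \<partial>lborel) * (\<integral>\<^sup>+w. ennreal (\<bar>k0 (v,w)\<bar> * (h0 (y,w))\<^sup>2) \<partial>lborel)"
    by (rule CS_weighted) auto
  also have "\<dots> \<le> (ennreal C * (\<integral>\<^sup>+z. ennreal (gk a z) \<partial>lborel)) * (\<integral>\<^sup>+w. ennreal (C * gk a (v - w) * (h0 (y,w))^2) \<partial>lborel)"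
  proof (rule mult_mono)
    have "(\<integral>\<^sup>+w. ennreal \<bar>k0 (v,w)\<bar> \<partial>lborel) \<le> (\<integral>\<^sup>+w. ennreal C * ennreal (gk a (v - w)) \<partial>lborel)"
    proof (intro nn_integral_mono)
      fix w
      have "ennreal \<bar>k0 (v,w)\<bar> \<le> ennreal (C * gk a (v-w))" using kb[of v w] by (rule ennreal_leI)
      then show "ennreal \<bar>k0 (v,w)\<bar> \<le> ennreal C * ennreal (gk a (v - w))"
        by (simp add: ennreal_mult C gk_nonneg)
    qed
    also have "\<dots> = ennreal C * (\<integral>\<^sup>+w. ennreal (gk a (v - w)) \<partial>lborel)"
      by (rule nn_integral_cmult) measurable
    also have "(\<integral>\<^sup>+w. ennreal (gk a (v - w)) \<partial>lborel) = (\<integral>\<^sup>+z. ennreal (gk a z) \<partial>lborel)"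
      by (subst gk_commute, rule nn_integral_translate[where f="\<lambda>z. ennreal (gk a z)"]) measurable
    finally show "(\<integral>\<^sup>+w. ennreal \<bar>k0 (v,w)\<bar> \<partial>lborel) \<le> ennreal C * (\<integral>\<^sup>+z. ennreal (gk a z) \<partial>lborel)" .
    show "(\<integral>\<^sup>+w. ennreal (\<bar>k0 (v,w)\<bar> * (h0 (y,w))\<^sup>2) \<partial>lborel) \<le> (\<integral>\<^sup>+w. ennreal (C * gk a (v - w) * (h0 (y,w))^2) \<partial>lborel)"
      using kb by (intro nn_integral_mono ennreal_leI mult_right_mono) auto
  qed auto
  finally show ?thesis .
qed


lemma S_pointwise:
  fixes W F :: "real \<Rightarrow> real"
  assumes [measurable]: "W \<in> borel_measurable borel" "F \<in> borel_measurable borel"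
    and W: "\<And>s. 0 \<le> W s" "\<And>s. W s \<le> indicator {0..D} s"
  shows "ennreal ((\<integral>s. W s * F s \<partial>lborel)^2) \<le> ennreal D * (\<integral>\<^sup>+s. ennreal (W s * (F s)^2) \<partial>lborel)"
proof -
  let ?I = "\<integral>s. W s * F s \<partial>lborel"
  have "ennreal (?I^2) = (ennreal \<bar>?I\<bar>)^2" by (simp add: ennreal_power)
  also have "\<dots> \<le> (\<integral>\<^sup>+s. ennreal \<bar>W s * F s\<bar> \<partial>lborel)^2"
    by (intro power_mono ennreal_abs_integral_le) simp
  also have "\<dots> = (\<integral>\<^sup>+s. ennreal (W s * \<bar>F s\<bar>) \<partial>lborel)^2"
    using W by (simp add: abs_mult)
  also have "\<dots> \<le> (\<integral>\<^sup>+s. ennreal (W s) \<partial>lborel) * (\<integral>\<^sup>+s. ennreal (W s * (F s)\<^sup>2) \<partial>lborel)"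
    by (rule CS_weighted) (auto simp: W)
  also have "\<dots> \<le> ennreal D * (\<integral>\<^sup>+s. ennreal (W s * (F s)\<^sup>2) \<partial>lborel)"
  proof (rule mult_right_mono)
    have "(\<integral>\<^sup>+s. ennreal (W s) \<partial>lborel) \<le> (\<integral>\<^sup>+s. indicator {0..D} s \<partial>lborel)"
    proof (intro nn_integral_mono)
      fix s
      have "ennreal (W s) \<le> ennreal (indicator {0..D} s)" using W(2)[of s] by (rule ennreal_leI)
      then show "ennreal (W s) \<le> indicator {0..D} s" by (simp add: ennreal_indicator)
    qed
    also have "\<dots> \<le> ennreal D"
      by (cases "0 \<le> D") auto
    finally show "(\<integral>\<^sup>+s. ennreal (W s) \<partial>lborel) \<le> ennreal D" .
  qed auto
  finally show ?thesis .
qed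

lemma nn_integral_exp_neg:
  assumes "(c::real) > 0"
  shows "(\<integral>\<^sup>+s. ennreal (exp (- c * s)) * indicator {0..} s \<partial>lborel) = ennreal (1 / c)"
  using nn_integral_has_integral_lebesgue'[OF _ has_integral_exp_minus_to_infinity[OF assms, of 0]]
  by simp

lemma x_integral_bound:
  fixes Phi :: "R3 \<times> R3 \<Rightarrow> real" and nuf :: "R3 \<Rightarrow> real" and U :: "((R3 \<times> R3) \<times> real) set"
  assumes [measurable]: "Phi \<in> borel_measurable (borel \<Otimes>\<^sub>M borel)" "nuf \<in> borel_measurable borel"
    "U \<in> sets ((borel \<Otimes>\<^sub>M borel) \<Otimes>\<^sub>M borel)" "\<Omega> \<in> sets borel"
    and UP: "\<And>x s. ((x,v),s) \<in> U \<Longrightarrow> 0 < s \<and> x - s *\<^sub>R v \<in> \<Omega>"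
    and nub: "\<nu>0 \<le> nuf v" and nu0: "\<nu>0 > 0"
  shows "(\<integral>\<^sup>+x. \<integral>\<^sup>+s. ennreal (indicator U ((x,v),s) * exp (- nuf v * s) * (Phi (x - s *\<^sub>R v, v))^2) \<partial>lborel \<partial>lborel)
     \<le> ennreal (1/\<nu>0) * (\<integral>\<^sup>+y. indicator \<Omega> y * ennreal ((Phi (y,v))^2) \<partial>lborel)"
proof -
  let ?G = "\<integral>\<^sup>+y. indicator \<Omega> y * ennreal ((Phi (y,v))^2) \<partial>lborel"
  have "(\<integral>\<^sup>+x. \<integral>\<^sup>+s. ennreal (indicator U ((x,v),s) * exp (- nuf v * s) * (Phi (x - s *\<^sub>R v, v))^2) \<partial>lborel \<partial>lborel)
     = (\<integral>\<^sup>+s. \<integral>\<^sup>+x. ennreal (indicator U ((x,v),s) * exp (- nuf v * s) * (Phi (x - s *\<^sub>R v, v))^2) \<partial>lborel \<partial>lborel)"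
  proof (rule lborel_pair.Fubini'[symmetric])
    show "(\<lambda>(x, s). ennreal (indicator U ((x,v),s) * exp (- nuf v * s) * (Phi (x - s *\<^sub>R v, v))^2)) \<in> borel_measurable (lborel \<Otimes>\<^sub>M lborel)"
      apply (subst measurable_cong_sets[OF sets_pair_measure_cong[OF sets_lborel sets_lborel] refl])
      by measurable
  qed
  also have "\<dots> \<le> (\<integral>\<^sup>+s. ennreal (exp (- \<nu>0 * s)) * indicator {0..} s * ?G \<partial>lborel)"
  proof (rule nn_integral_mono)
    fix s :: real
    have "(\<integral>\<^sup>+x. ennreal (indicator U ((x,v),s) * exp (- nuf v * s) * (Phi (x - s *\<^sub>R v, v))^2) \<partial>lborel)
       \<le> (\<integral>\<^sup>+x. ennreal (exp (- \<nu>0 * s)) * indicator {0..} s * (indicator \<Omega> (x - s *\<^sub>R v) * ennreal ((Phi (x - s *\<^sub>R v, v))^2)) \<partial>lborel)"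
    proof (rule nn_integral_mono)
      fix x
      show "ennreal (indicator U ((x,v),s) * exp (- nuf v * s) * (Phi (x - s *\<^sub>R v, v))^2)
         \<le> ennreal (exp (- \<nu>0 * s)) * indicator {0..} s * (indicator \<Omega> (x - s *\<^sub>R v) * ennreal ((Phi (x - s *\<^sub>R v, v))^2))"
      proof (cases "((x,v),s) \<in> U")
        case True
        then have s: "0 < s" and xs: "x - s *\<^sub>R v \<in> \<Omega>" using UP by auto
        have "exp (- nuf v * s) \<le> exp (- \<nu>0 * s)" using nub s by (simp add: mult_right_mono)
        then have "exp (- nuf v * s) * (Phi (x - s *\<^sub>R v, v))^2 \<le> exp (- \<nu>0 * s) * (Phi (x - s *\<^sub>R v, v))^2"
          by (intro mult_right_mono) auto
        moreover have "ennreal (indicator U ((x,v),s) * exp (- nuf v * s) * (Phi (x - s *\<^sub>R v, v))^2) = ennreal (exp (- nuf v * s) * (Phi (x - s *\<^sub>R v, v))^2)"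
          using True by simp
        moreover have "ennreal (exp (- \<nu>0 * s)) * indicator {0..} s * (indicator \<Omega> (x - s *\<^sub>R v) * ennreal ((Phi (x - s *\<^sub>R v, v))^2))
           = ennreal (exp (- \<nu>0 * s) * (Phi (x - s *\<^sub>R v, v))^2)"
          using s xs by (simp add: ennreal_mult)
        ultimately show ?thesis by (simp only:) (rule ennreal_leI)
      qed simp
    qed
    also have "\<dots> = ennreal (exp (- \<nu>0 * s)) * indicator {0..} s * (\<integral>\<^sup>+x. indicator \<Omega> (x - s *\<^sub>R v) * ennreal ((Phi (x - s *\<^sub>R v, v))^2) \<partial>lborel)"
      by (rule nn_integral_cmult) measurable
    also have "(\<integral>\<^sup>+x. indicator \<Omega> (x - s *\<^sub>R v) * ennreal ((Phi (x - s *\<^sub>R v, v))^2) \<partial>lborel) = ?G"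
      by (rule nn_integral_translate[where f="\<lambda>y. indicator \<Omega> y * ennreal ((Phi (y,v))^2)"]) measurable
    finally show "(\<integral>\<^sup>+x. ennreal (indicator U ((x,v),s) * exp (- nuf v * s) * (Phi (x - s *\<^sub>R v, v))^2) \<partial>lborel)
       \<le> ennreal (exp (- \<nu>0 * s)) * indicator {0..} s * ?G" .
  qed
  also have "\<dots> = (\<integral>\<^sup>+s. ennreal (exp (- \<nu>0 * s)) * indicator {0..} s \<partial>lborel) * ?G"
    by (rule nn_integral_multc) measurable
  also have "\<dots> = ennreal (1/\<nu>0) * ?G" using nn_integral_exp_neg[OF nu0] by simp
  finally show ?thesis .
qed


lemma meas_nn_lborel[measurable (raw)]:
  "case_prod f \<in> borel_measurable (N \<Otimes>\<^sub>M borel) \<Longrightarrow> (\<lambda>x. \<integral>\<^sup>+y. f x y \<partial>lborel) \<in> borel_measurable N"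
  by (rule lborel.borel_measurable_nn_integral)
     (simp add: measurable_cong_sets[OF sets_pair_measure_cong[OF refl sets_lborel] refl])

lemma meas_int_lborel[measurable (raw)]:
  fixes f :: "_ \<Rightarrow> _ \<Rightarrow> real"
  shows "case_prod f \<in> borel_measurable (N \<Otimes>\<^sub>M borel) \<Longrightarrow> (\<lambda>x. \<integral>y. f x y \<partial>lborel) \<in> borel_measurable N"
  by (rule lborel.borel_measurable_lebesgue_integral)
     (simp add: measurable_cong_sets[OF sets_pair_measure_cong[OF refl sets_lborel] refl])

lemma lborel_pair_meas:
  "case_prod f \<in> borel_measurable (borel \<Otimes>\<^sub>M borel) \<Longrightarrow> case_prod f \<in> borel_measurable (lborel \<Otimes>\<^sub>M lborel)"
  by (simp add: measurable_cong_sets[OF sets_pair_measure_cong[OF sets_lborel sets_lborel] refl])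

lemma S0_x_bound:
  fixes h0 k0 :: "R3 \<times> R3 \<Rightarrow> real" and nuf :: "R3 \<Rightarrow> real" and U :: "((R3 \<times> R3) \<times> real) set"
  assumes [measurable]: "F0 \<in> borel_measurable (borel \<Otimes>\<^sub>M borel)"
    "nuf \<in> borel_measurable borel" "U \<in> sets ((borel \<Otimes>\<^sub>M borel) \<Otimes>\<^sub>M borel)" "\<Omega> \<in> sets borel"
    and nub: "\<And>v. \<nu>0 \<le> nuf v" and nu0: "\<nu>0 > 0"
    and UP: "\<And>x v s. ((x,v),s) \<in> U \<Longrightarrow> 0 < s \<and> x - s *\<^sub>R v \<in> \<Omega> \<and> s * norm v \<le> d"
    and v: "v \<noteq> 0"
  shows "(\<integral>\<^sup>+x. indicator \<Omega> x * ennreal ((\<integral>s. indicator U ((x,v),s) * exp (- nuf v * s) * F0 (x - s *\<^sub>R v, v) \<partial>lborel)^2) \<partial>lborel)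
    \<le> ennreal (d / norm v) * (ennreal (1/\<nu>0) * (\<integral>\<^sup>+y. indicator \<Omega> y * ennreal ((F0 (y,v))^2) \<partial>lborel))"
proof -
  let ?W = "\<lambda>x s. indicator U ((x,v),s) * exp (- nuf v * s)"
  have Wb: "?W x s \<le> indicator {0..d / norm v} s" for x s
  proof (cases "((x,v),s) \<in> U")
    case True
    then have s: "0 < s" and sv: "s * norm v \<le> d" using UP by auto
    have "s \<le> d / norm v" using sv v by (simp add: field_simps)
    moreover have "exp (- nuf v * s) \<le> 1" using nub[of v] nu0 s by (simp add: mult_nonneg_nonneg)
    ultimately show ?thesis using True s by simp
  qed simp
  have "(\<integral>\<^sup>+x. indicator \<Omega> x * ennreal ((\<integral>s. ?W x s * F0 (x - s *\<^sub>R v, v) \<partial>lborel)^2) \<partial>lborel)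
     \<le> (\<integral>\<^sup>+x. ennreal (d / norm v) * (\<integral>\<^sup>+s. ennreal (?W x s * (F0 (x - s *\<^sub>R v, v))^2) \<partial>lborel) \<partial>lborel)"
  proof (rule nn_integral_mono)
    fix x
    have "indicator \<Omega> x * ennreal ((\<integral>s. ?W x s * F0 (x - s *\<^sub>R v, v) \<partial>lborel)^2) \<le> ennreal ((\<integral>s. ?W x s * F0 (x - s *\<^sub>R v, v) \<partial>lborel)^2)"
      by (simp add: indicator_def)
    also have "\<dots> \<le> ennreal (d / norm v) * (\<integral>\<^sup>+s. ennreal (?W x s * (F0 (x - s *\<^sub>R v, v))^2) \<partial>lborel)"
      by (rule S_pointwise) (use Wb in auto)
    finally show "indicator \<Omega> x * ennreal ((\<integral>s. ?W x s * F0 (x - s *\<^sub>R v, v) \<partial>lborel)^2) \<le> ennreal (d / norm v) * (\<integral>\<^sup>+s. ennreal (?W x s * (F0 (x - s *\<^sub>R v, v))^2) \<partial>lborel)" .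
  qed
  also have "\<dots> = ennreal (d / norm v) * (\<integral>\<^sup>+x. \<integral>\<^sup>+s. ennreal (?W x s * (F0 (x - s *\<^sub>R v, v))^2) \<partial>lborel \<partial>lborel)"
    by (rule nn_integral_cmult) measurable
  also have "\<dots> \<le> ennreal (d / norm v) * (ennreal (1/\<nu>0) * (\<integral>\<^sup>+y. indicator \<Omega> y * ennreal ((F0 (y,v))^2) \<partial>lborel))"
    by (intro mult_left_mono x_integral_bound) (use UP nub nu0 in auto)
  finally show ?thesis .
qed


lemma ennreal_mult_eq5:
  fixes a b c e :: real
  assumes "0 \<le> a" "0 \<le> b" "0 \<le> c" "0 \<le> e"
  shows "ennreal a * ennreal (b * c * e) = (ennreal e * ennreal b) * ennreal (a * c)"
proof -
  have "ennreal a * ennreal (b * c * e) = ennreal (a * (b * c * e))"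
    using assms by (intro ennreal_mult[symmetric]) auto
  moreover have "(ennreal e * ennreal b) * ennreal (a * c) = ennreal ((e * b) * (a * c))"
    using assms by (simp add: ennreal_mult)
  ultimately show ?thesis by (simp add: ac_simps)
qed

lemma v_integral_bound:
  fixes h0 k0 :: "R3 \<times> R3 \<Rightarrow> real"
  assumes [measurable]: "h0 \<in> borel_measurable (borel \<Otimes>\<^sub>M borel)" "k0 \<in> borel_measurable (borel \<Otimes>\<^sub>M borel)"
    "\<Omega> \<in> sets borel"
    and kb: "\<And>v w. \<bar>k0 (v,w)\<bar> \<le> C * gk a (v - w)" and C: "C \<ge> 0" and a: "a > 0"
  shows "(\<integral>\<^sup>+v. ennreal (1 / norm v) * (\<integral>\<^sup>+y. indicator \<Omega> y * ennreal ((\<integral>w. k0 (v,w) * h0 (y,w) \<partial>lborel)^2) \<partial>lborel) \<partial>lborel)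
    \<le> (ennreal C * (\<integral>\<^sup>+z. ennreal (gk a z) \<partial>lborel)) * ((ennreal C * (2 * (\<integral>\<^sup>+z. ennreal (g2 a z) \<partial>lborel))) * (\<integral>\<^sup>+y. \<integral>\<^sup>+w. ennreal ((h0 (y,w))^2) \<partial>lborel \<partial>lborel))"
proof -
  define K where "K = ennreal C * (\<integral>\<^sup>+z. ennreal (gk a z) \<partial>lborel)"
  define L where "L = ennreal C * (2 * (\<integral>\<^sup>+z. ennreal (g2 a z) \<partial>lborel))"
  define \<Psi> where "\<Psi> v y w = ennreal (1 / norm v) * ennreal (C * gk a (v - w) * (h0 (y,w))^2)" for v y w
  have "(\<integral>\<^sup>+v. ennreal (1 / norm v) * (\<integral>\<^sup>+y. indicator \<Omega> y * ennreal ((\<integral>w. k0 (v,w) * h0 (y,w) \<partial>lborel)^2) \<partial>lborel) \<partial>lborel)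
     \<le> (\<integral>\<^sup>+v. K * (\<integral>\<^sup>+y. \<integral>\<^sup>+w. \<Psi> v y w \<partial>lborel \<partial>lborel) \<partial>lborel)"
  proof (rule nn_integral_mono)
    fix v :: R3
    have "(\<integral>\<^sup>+y. indicator \<Omega> y * ennreal ((\<integral>w. k0 (v,w) * h0 (y,w) \<partial>lborel)^2) \<partial>lborel)
       \<le> (\<integral>\<^sup>+y. K * (\<integral>\<^sup>+w. ennreal (C * gk a (v - w) * (h0 (y,w))^2) \<partial>lborel) \<partial>lborel)"
    proof (rule nn_integral_mono)
      fix y
      have "indicator \<Omega> y * ennreal ((\<integral>w. k0 (v,w) * h0 (y,w) \<partial>lborel)^2) \<le> ennreal ((\<integral>w. k0 (v,w) * h0 (y,w) \<partial>lborel)^2)"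
        by (simp add: indicator_def)
      also have "\<dots> \<le> K * (\<integral>\<^sup>+w. ennreal (C * gk a (v - w) * (h0 (y,w))^2) \<partial>lborel)"
        unfolding K_def by (rule F0_bound) (use kb C in auto)
      finally show "indicator \<Omega> y * ennreal ((\<integral>w. k0 (v,w) * h0 (y,w) \<partial>lborel)^2) \<le> K * (\<integral>\<^sup>+w. ennreal (C * gk a (v - w) * (h0 (y,w))^2) \<partial>lborel)" .
    qed
    also have "\<dots> = K * (\<integral>\<^sup>+y. \<integral>\<^sup>+w. ennreal (C * gk a (v - w) * (h0 (y,w))^2) \<partial>lborel \<partial>lborel)"
      by (rule nn_integral_cmult) measurable
    finally have "ennreal (1 / norm v) * (\<integral>\<^sup>+y. indicator \<Omega> y * ennreal ((\<integral>w. k0 (v,w) * h0 (y,w) \<partial>lborel)^2) \<partial>lborel)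
       \<le> ennreal (1 / norm v) * (K * (\<integral>\<^sup>+y. \<integral>\<^sup>+w. ennreal (C * gk a (v - w) * (h0 (y,w))^2) \<partial>lborel \<partial>lborel))"
      by (rule mult_left_mono) simp
    also have "\<dots> = K * (ennreal (1 / norm v) * (\<integral>\<^sup>+y. \<integral>\<^sup>+w. ennreal (C * gk a (v - w) * (h0 (y,w))^2) \<partial>lborel \<partial>lborel))"
      by (simp add: ac_simps)
    also have "ennreal (1 / norm v) * (\<integral>\<^sup>+y. \<integral>\<^sup>+w. ennreal (C * gk a (v - w) * (h0 (y,w))^2) \<partial>lborel \<partial>lborel)
       = (\<integral>\<^sup>+y. ennreal (1 / norm v) * (\<integral>\<^sup>+w. ennreal (C * gk a (v - w) * (h0 (y,w))^2) \<partial>lborel) \<partial>lborel)"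
      by (rule nn_integral_cmult[symmetric]) measurable
    also have "\<dots> = (\<integral>\<^sup>+y. \<integral>\<^sup>+w. \<Psi> v y w \<partial>lborel \<partial>lborel)"
      unfolding \<Psi>_def by (intro nn_integral_cong nn_integral_cmult[symmetric]) measurable
    finally show "ennreal (1 / norm v) * (\<integral>\<^sup>+y. indicator \<Omega> y * ennreal ((\<integral>w. k0 (v,w) * h0 (y,w) \<partial>lborel)^2) \<partial>lborel)
       \<le> K * (\<integral>\<^sup>+y. \<integral>\<^sup>+w. \<Psi> v y w \<partial>lborel \<partial>lborel)" .
  qed
  also have "\<dots> = K * (\<integral>\<^sup>+v. \<integral>\<^sup>+y. \<integral>\<^sup>+w. \<Psi> v y w \<partial>lborel \<partial>lborel \<partial>lborel)"
    by (rule nn_integral_cmult) (unfold \<Psi>_def, measurable)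
  finally have step1: "(\<integral>\<^sup>+v. ennreal (1 / norm v) * (\<integral>\<^sup>+y. indicator \<Omega> y * ennreal ((\<integral>w. k0 (v,w) * h0 (y,w) \<partial>lborel)^2) \<partial>lborel) \<partial>lborel)
     \<le> K * (\<integral>\<^sup>+v. \<integral>\<^sup>+y. \<integral>\<^sup>+w. \<Psi> v y w \<partial>lborel \<partial>lborel \<partial>lborel)" .
  have "(\<integral>\<^sup>+v. \<integral>\<^sup>+y. \<integral>\<^sup>+w. \<Psi> v y w \<partial>lborel \<partial>lborel \<partial>lborel) = (\<integral>\<^sup>+y. \<integral>\<^sup>+v. \<integral>\<^sup>+w. \<Psi> v y w \<partial>lborel \<partial>lborel \<partial>lborel)"
    by (rule lborel_pair.Fubini'[symmetric], rule lborel_pair_meas) (unfold \<Psi>_def, measurable)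
  also have "\<dots> = (\<integral>\<^sup>+y. \<integral>\<^sup>+w. \<integral>\<^sup>+v. \<Psi> v y w \<partial>lborel \<partial>lborel \<partial>lborel)"
    by (rule nn_integral_cong, rule lborel_pair.Fubini'[symmetric], rule lborel_pair_meas) (unfold \<Psi>_def, measurable)
  also have "\<dots> \<le> (\<integral>\<^sup>+y. \<integral>\<^sup>+w. ennreal ((h0 (y,w))^2) * L \<partial>lborel \<partial>lborel)"
  proof (intro nn_integral_mono)
    fix y w :: R3
    have "(\<integral>\<^sup>+v. \<Psi> v y w \<partial>lborel) = (\<integral>\<^sup>+v. (ennreal ((h0 (y,w))^2) * ennreal C) * ennreal (1 / norm v * gk a (v - w)) \<partial>lborel)"
      unfolding \<Psi>_def using C by (intro nn_integral_cong ennreal_mult_eq5) (auto simp: gk_nonneg)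
    also have "\<dots> = (ennreal ((h0 (y,w))^2) * ennreal C) * (\<integral>\<^sup>+v. ennreal (1 / norm v * gk a (v - w)) \<partial>lborel)"
      by (rule nn_integral_cmult) measurable
    also have "\<dots> \<le> (ennreal ((h0 (y,w))^2) * ennreal C) * (2 * (\<integral>\<^sup>+z. ennreal (g2 a z) \<partial>lborel))"
      by (intro mult_left_mono J_bound a) simp
    also have "\<dots> = ennreal ((h0 (y,w))^2) * L" by (simp add: L_def ac_simps)
    finally show "(\<integral>\<^sup>+v. \<Psi> v y w \<partial>lborel) \<le> ennreal ((h0 (y,w))^2) * L" .
  qed
  also have "\<dots> = (\<integral>\<^sup>+y. (\<integral>\<^sup>+w. ennreal ((h0 (y,w))^2) \<partial>lborel) * L \<partial>lborel)"
    by (rule nn_integral_cong, rule nn_integral_multc) measurable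
  also have "\<dots> = (\<integral>\<^sup>+y. \<integral>\<^sup>+w. ennreal ((h0 (y,w))^2) \<partial>lborel \<partial>lborel) * L"
    by (rule nn_integral_multc) measurable
  finally have "(\<integral>\<^sup>+v. \<integral>\<^sup>+y. \<integral>\<^sup>+w. \<Psi> v y w \<partial>lborel \<partial>lborel \<partial>lborel) \<le> L * (\<integral>\<^sup>+y. \<integral>\<^sup>+w. ennreal ((h0 (y,w))^2) \<partial>lborel \<partial>lborel)"
    by (simp only: mult.commute)
  then have "K * (\<integral>\<^sup>+v. \<integral>\<^sup>+y. \<integral>\<^sup>+w. \<Psi> v y w \<partial>lborel \<partial>lborel \<partial>lborel) \<le> K * (L * (\<integral>\<^sup>+y. \<integral>\<^sup>+w. ennreal ((h0 (y,w))^2) \<partial>lborel \<partial>lborel))"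
    by (rule mult_left_mono) simp
  with step1 show ?thesis unfolding K_def L_def by (rule order_trans)
qed


lemma main_estimate:
  fixes h0 k0 :: "R3 \<times> R3 \<Rightarrow> real" and nuf :: "R3 \<Rightarrow> real" and U :: "((R3 \<times> R3) \<times> real) set"
  assumes [measurable]: "h0 \<in> borel_measurable (borel \<Otimes>\<^sub>M borel)" "k0 \<in> borel_measurable (borel \<Otimes>\<^sub>M borel)"
    "nuf \<in> borel_measurable borel" "U \<in> sets ((borel \<Otimes>\<^sub>M borel) \<Otimes>\<^sub>M borel)" "\<Omega> \<in> sets borel"
    and kb: "\<And>v w. \<bar>k0 (v,w)\<bar> \<le> C * gk a (v - w)" and C: "C \<ge> 0" and a: "a > 0"
    and nub: "\<And>v. \<nu>0 \<le> nuf v" and nu0: "\<nu>0 > 0"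
    and UP: "\<And>x v s. ((x,v),s) \<in> U \<Longrightarrow> 0 < s \<and> x - s *\<^sub>R v \<in> \<Omega> \<and> s * norm v \<le> d"
    and d: "d \<ge> 0"
  shows "(\<integral>\<^sup>+v. \<integral>\<^sup>+x. indicator \<Omega> x * ennreal ((\<integral>s. indicator U ((x,v),s) * exp (- nuf v * s) * (\<integral>w. k0 (v,w) * h0 (x - s *\<^sub>R v, w) \<partial>lborel) \<partial>lborel)^2) \<partial>lborel \<partial>lborel)
    \<le> ennreal (d / \<nu>0) * ((ennreal C * (\<integral>\<^sup>+z. ennreal (gk a z) \<partial>lborel)) * ((ennreal C * (2 * (\<integral>\<^sup>+z. ennreal (g2 a z) \<partial>lborel))) * (\<integral>\<^sup>+y. \<integral>\<^sup>+w. ennreal ((h0 (y,w))^2) \<partial>lborel \<partial>lborel)))"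
proof -
  define F0 where "F0 p = (\<integral>w. k0 (snd p, w) * h0 (fst p, w) \<partial>lborel)" for p :: "R3 \<times> R3"
  have [measurable]: "F0 \<in> borel_measurable (borel \<Otimes>\<^sub>M borel)" unfolding F0_def by measurable
  define G where "G v = (\<integral>\<^sup>+y. indicator \<Omega> y * ennreal ((F0 (y,v))^2) \<partial>lborel)" for v
  have "(\<integral>\<^sup>+v. \<integral>\<^sup>+x. indicator \<Omega> x * ennreal ((\<integral>s. indicator U ((x,v),s) * exp (- nuf v * s) * (\<integral>w. k0 (v,w) * h0 (x - s *\<^sub>R v, w) \<partial>lborel) \<partial>lborel)^2) \<partial>lborel \<partial>lborel)
     \<le> (\<integral>\<^sup>+v. ennreal (d / \<nu>0) * (ennreal (1 / norm v) * G v) \<partial>lborel)"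
  proof (rule nn_integral_mono_AE)
    show "AE v in lborel. (\<integral>\<^sup>+x. indicator \<Omega> x * ennreal ((\<integral>s. indicator U ((x,v),s) * exp (- nuf v * s) * (\<integral>w. k0 (v,w) * h0 (x - s *\<^sub>R v, w) \<partial>lborel) \<partial>lborel)^2) \<partial>lborel)
       \<le> ennreal (d / \<nu>0) * (ennreal (1 / norm v) * G v)"
      using AE_lborel_singleton[of 0]
    proof eventually_elim
      case (elim v)
      have "(\<integral>\<^sup>+x. indicator \<Omega> x * ennreal ((\<integral>s. indicator U ((x,v),s) * exp (- nuf v * s) * F0 (x - s *\<^sub>R v, v) \<partial>lborel)^2) \<partial>lborel)
        \<le> ennreal (d / norm v) * (ennreal (1/\<nu>0) * G v)"
        unfolding G_def by (rule S0_x_bound) (use nub nu0 UP elim in auto)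
      also have "\<dots> = ennreal (d / \<nu>0) * (ennreal (1 / norm v) * G v)"
      proof -
        have "ennreal (d / norm v) * ennreal (1/\<nu>0) = ennreal (d / norm v * (1/\<nu>0))"
          using d nu0 by (intro ennreal_mult[symmetric]) auto
        also have "\<dots> = ennreal (d / \<nu>0 * (1 / norm v))" by (simp add: mult.commute)
        also have "\<dots> = ennreal (d / \<nu>0) * ennreal (1 / norm v)"
          using d nu0 by (intro ennreal_mult) auto
        finally show ?thesis by (simp add: mult.assoc[symmetric])
      qed
      finally show ?case by (simp add: F0_def)
    qed
  qed
  also have "\<dots> = ennreal (d / \<nu>0) * (\<integral>\<^sup>+v. ennreal (1 / norm v) * G v \<partial>lborel)"
    by (rule nn_integral_cmult) (unfold G_def, measurable)
  also have "\<dots> \<le> ennreal (d / \<nu>0) * ((ennreal C * (\<integral>\<^sup>+z. ennreal (gk a z) \<partial>lborel)) * ((ennreal C * (2 * (\<integral>\<^sup>+z. ennreal (g2 a z) \<partial>lborel))) * (\<integral>\<^sup>+y. \<integral>\<^sup>+w. ennreal ((h0 (y,w))^2) \<partial>lborel \<partial>lborel)))"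
    unfolding G_def F0_def by (intro mult_left_mono) (simp_all add: v_integral_bound kb C a)
  finally show ?thesis .
qed


lemma borel_measurable_completion_AE:
  fixes f g :: "'a \<Rightarrow> real"
  assumes f: "f \<in> borel_measurable M" and ae: "AE x in M. f x = g x"
  shows "g \<in> borel_measurable (completion M)"
proof -
  obtain N where N: "N \<in> null_sets M" "{x \<in> space M. \<not> f x = g x} \<subseteq> N"
    using ae by (auto elim!: AE_E)
  show ?thesis
  proof (rule borel_measurableI)
    fix S :: "real set" assume "open S"
    then have fS: "f -` S \<inter> space M \<in> sets M" using f by (simp add: borel_measurable_vimage_open)
    have eq: "g -` S \<inter> space (completion M) = ((f -` S \<inter> space M) - N) \<union> ((g -` S \<inter> space M) \<inter> N)"
      using N by auto
    have "(f -` S \<inter> space M) - N \<in> sets (completion M)" using fS N by auto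
    moreover have "(g -` S \<inter> space M) \<inter> N \<in> sets (completion M)"
      by (rule sets_completionI_sub[OF N(1)]) auto
    ultimately show "g -` S \<inter> space (completion M) \<in> sets (completion M)"
      unfolding eq by auto
  qed
qed

lemma borel_version:
  fixes H :: "'a::euclidean_space \<Rightarrow> real"
  assumes Sb: "S \<in> sets borel" and H: "H \<in> borel_measurable (lebesgue_on S)"
  obtains h0 where "h0 \<in> borel_measurable borel" "\<And>p. p \<notin> S \<Longrightarrow> h0 p = 0"
    "AE p in lborel. p \<in> S \<longrightarrow> H p = h0 p"
proof -
  have "S \<inter> space lebesgue \<in> sets lebesgue" using Sb by auto
  then have "(\<lambda>p. indicator S p *\<^sub>R H p) \<in> borel_measurable lebesgue"
    using borel_measurable_restrict_space_iff[of S lebesgue H] H by simp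
  then obtain g' where g': "g' \<in> borel_measurable lborel" "AE p in lborel. indicator S p *\<^sub>R H p = g' p"
    using completion_ex_borel_measurable_real by blast
  let ?h0 = "\<lambda>p. indicator S p * g' p"
  show ?thesis
  proof
    show "?h0 \<in> borel_measurable borel" using g'(1) Sb by (simp add: borel_measurable_indicator)
    show "\<And>p. p \<notin> S \<Longrightarrow> ?h0 p = 0" by simp
    show "AE p in lborel. p \<in> S \<longrightarrow> H p = ?h0 p"
      using g'(2) by eventually_elim (auto simp: indicator_def)
  qed
qed

lemma AE_fibers:
  fixes P :: "'a::euclidean_space \<times> 'b::euclidean_space \<Rightarrow> bool"
  assumes "AE p in lborel. P p"
  obtains N1 where "N1 \<in> null_sets lborel" "\<And>x. x \<notin> N1 \<Longrightarrow> AE w in lborel. P (x, w)"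
proof -
  have "AE p in lborel \<Otimes>\<^sub>M lborel. P p" using assms by (subst lborel_prod)
  then have "AE x in lborel. AE w in lborel. P (x, w)" by (rule lborel_pair.AE_pair)
  then obtain N1 where "{x \<in> space lborel. \<not> (AE w in lborel. P (x, w))} \<subseteq> N1" "N1 \<in> null_sets lborel"
    by (rule AE_E) blast
  then show ?thesis using that by auto
qed

lemma emeasure_translate:
  fixes N :: "'a::euclidean_space set"
  assumes "N \<in> sets borel"
  shows "emeasure lborel {x. x - c \<in> N} = emeasure lborel N"
proof -
  have "emeasure lborel N = emeasure (distr lborel borel ((+) (- c))) N"
    by (simp add: lborel_distr_plus)
  also have "\<dots> = emeasure lborel ((+) (- c) -` N \<inter> space lborel)"
    using assms by (subst emeasure_distr) auto
  also have "(+) (- c) -` N \<inter> space lborel = {x. x - c \<in> N}" by auto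
  finally show ?thesis by simp
qed

lemma shear_null:
  fixes N1 :: "R3 set"
  assumes N1: "N1 \<in> null_sets lborel"
  shows "AE p in (lborel :: (R3 \<times> R3) measure). AE s in lborel. fst p - s *\<^sub>R snd p \<notin> N1"
proof -
  have N1b[measurable]: "N1 \<in> sets borel" using N1 by auto
  define Q :: "((R3 \<times> R3) \<times> real) set" where "Q = {q. fst (fst q) - snd q *\<^sub>R snd (fst q) \<in> N1}"
  have Qm: "Q \<in> sets (lborel \<Otimes>\<^sub>M lborel)"
  proof -
    have "Measurable.pred ((borel \<Otimes>\<^sub>M borel) \<Otimes>\<^sub>M borel) (\<lambda>(p, s). fst p - s *\<^sub>R snd p \<in> N1)"
      by measurable
    then have "Q \<in> sets ((borel \<Otimes>\<^sub>M borel) \<Otimes>\<^sub>M borel)" unfolding Q_def pred_def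
      by (simp add: space_pair_measure case_prod_beta)
    moreover have "sets ((borel \<Otimes>\<^sub>M borel) \<Otimes>\<^sub>M (borel :: real measure)) = sets ((lborel :: (R3 \<times> R3) measure) \<Otimes>\<^sub>M (lborel :: real measure))"
      by (intro sets_pair_measure_cong) (simp_all only: borel_prod sets_lborel)
    ultimately show ?thesis by simp
  qed
  have inner: "emeasure (lborel :: (R3 \<times> R3) measure) ((\<lambda>p. (p, s)) -` Q) = 0" for s
  proof -
    have Qs: "(\<lambda>p. (p, s)) -` Q = {p. fst p - s *\<^sub>R snd p \<in> N1}" by (auto simp: Q_def)
    have Qsm: "{p :: R3 \<times> R3. fst p - s *\<^sub>R snd p \<in> N1} \<in> sets (lborel \<Otimes>\<^sub>M lborel)"
    proof -
      have "Measurable.pred (borel \<Otimes>\<^sub>M borel) (\<lambda>p :: R3 \<times> R3. fst p - s *\<^sub>R snd p \<in> N1)" by measurable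
      then have "{p :: R3 \<times> R3. fst p - s *\<^sub>R snd p \<in> N1} \<in> sets (borel \<Otimes>\<^sub>M borel)"
        unfolding pred_def by (simp add: space_pair_measure)
      then show ?thesis by (simp add: sets_pair_measure_cong[OF sets_lborel sets_lborel])
    qed
    have "emeasure (lborel :: (R3 \<times> R3) measure) {p. fst p - s *\<^sub>R snd p \<in> N1}
        = emeasure (lborel \<Otimes>\<^sub>M lborel) {p :: R3 \<times> R3. fst p - s *\<^sub>R snd p \<in> N1}"
      by (simp add: lborel_prod)
    also have "\<dots> = (\<integral>\<^sup>+v. emeasure lborel ((\<lambda>x. (x, v)) -` {p :: R3 \<times> R3. fst p - s *\<^sub>R snd p \<in> N1}) \<partial>lborel)"
      by (rule lborel_pair.emeasure_pair_measure_alt2[OF Qsm])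
    also have "\<dots> = (\<integral>\<^sup>+v. 0 \<partial>(lborel :: R3 measure))"
    proof (rule nn_integral_cong)
      fix v :: R3
      have "(\<lambda>x. (x, v)) -` {p :: R3 \<times> R3. fst p - s *\<^sub>R snd p \<in> N1} = {x. x - s *\<^sub>R v \<in> N1}" by auto
      then show "emeasure lborel ((\<lambda>x. (x, v)) -` {p :: R3 \<times> R3. fst p - s *\<^sub>R snd p \<in> N1}) = 0"
        using emeasure_translate[OF N1b, of "s *\<^sub>R v"] N1 by auto
    qed
    finally show ?thesis using Qs by simp
  qed
  have "emeasure (lborel \<Otimes>\<^sub>M lborel) Q = (\<integral>\<^sup>+s. emeasure lborel ((\<lambda>p. (p, s)) -` Q) \<partial>lborel)"
    by (rule lborel_pair.emeasure_pair_measure_alt2[OF Qm])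
  also have "\<dots> = 0" using inner by simp
  finally have "Q \<in> null_sets (lborel \<Otimes>\<^sub>M lborel)" using Qm by auto
  then have "AE q in lborel \<Otimes>\<^sub>M lborel. q \<notin> Q" by (rule AE_not_in)
  then have "AE p in lborel. AE s in lborel. (p, s) \<notin> Q" by (rule lborel_pair.AE_pair)
  then show ?thesis by (simp add: Q_def)
qed


definition Uset :: "R3 set \<Rightarrow> ((R3 \<times> R3) \<times> real) set" where
  "Uset \<Omega> = {q. 0 < snd q \<and> (\<forall>t\<in>{0..1}. fst (fst q) - (t * snd q) *\<^sub>R snd (fst q) \<in> \<Omega>)}"

lemma Uset_open:
  assumes "open \<Omega>"
  shows "open (Uset \<Omega>)"
proof -
  define T where "T = (\<lambda>z :: real \<times> (R3 \<times> R3) \<times> real. fst (fst (snd z)) - (fst z * snd (snd z)) *\<^sub>R snd (fst (snd z))) -` (- \<Omega>)"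
  have cT: "closed T" unfolding T_def
    by (rule continuous_closed_vimage) (use assms in \<open>auto intro!: continuous_intros\<close>)
  have cP: "closed {q. \<exists>t. t \<in> {0..1::real} \<and> (t, q) \<in> T}"
    by (rule closed_compact_projection[OF compact_Icc cT])
  have eq: "Uset \<Omega> = {q. 0 < snd q} \<inter> - {q. \<exists>t. t \<in> {0..1::real} \<and> (t, q) \<in> T}"
    by (auto simp: Uset_def T_def)
  have "open {q :: (R3 \<times> R3) \<times> real. 0 < snd q}"
    by (intro open_Collect_less continuous_intros)
  then show ?thesis unfolding eq using cP by (intro open_Int) (auto simp: open_Compl)
qed

lemma Uset_sets:
  assumes "open \<Omega>"
  shows "Uset \<Omega> \<in> sets ((borel \<Otimes>\<^sub>M borel) \<Otimes>\<^sub>M borel)"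
  using borel_open[OF Uset_open[OF assms]] by (simp only: borel_prod)

lemma exit_in_Uset:
  assumes x: "x \<in> \<Omega>" and s: "0 < s" and se: "ereal s < exit_time \<Omega> x v"
  shows "((x, v), s) \<in> Uset \<Omega>"
  unfolding Uset_def
proof (safe)
  show "0 < snd ((x, v), s)" using s by simp
  fix t :: real assume t: "t \<in> {0..1}"
  show "fst (fst ((x, v), s)) - (t * snd ((x, v), s)) *\<^sub>R snd (fst ((x, v), s)) \<in> \<Omega>"
  proof (cases "t = 0")
    case True then show ?thesis using x by simp
  next
    case False
    then have ts: "0 < t * s" "t * s \<le> s" using t s by (auto simp: mult_le_cancel_right1)
    show ?thesis
    proof (rule ccontr)
      assume "\<not> ?thesis"
      then have "t * s \<in> {s. 0 < s \<and> x - s *\<^sub>R v \<notin> \<Omega>}" using ts by simp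
      then have "exit_time \<Omega> x v \<le> ereal (t * s)" unfolding exit_time_def
        by (intro Inf_lower) auto
      also have "\<dots> \<le> ereal s" using ts by simp
      finally show False using se by simp
    qed
  qed
qed

lemma Uset_not_exit:
  assumes U: "((x, v), s) \<in> Uset \<Omega>" and se: "\<not> ereal s < exit_time \<Omega> x v"
  shows "s = real_of_ereal (exit_time \<Omega> x v)"
proof -
  have s: "0 < s" and seg: "\<And>t. t \<in> {0..1} \<Longrightarrow> x - (t * s) *\<^sub>R v \<in> \<Omega>" using U by (auto simp: Uset_def)
  have "\<not> exit_time \<Omega> x v < ereal s"
  proof
    assume "exit_time \<Omega> x v < ereal s"
    then obtain s' where s': "0 < s'" "x - s' *\<^sub>R v \<notin> \<Omega>" "ereal s' < ereal s"
      unfolding exit_time_def Inf_less_iff by auto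
    have "s' / s \<in> {0..1}" using s' s by auto
    from seg[OF this] have "x - s' *\<^sub>R v \<in> \<Omega>" using s by simp
    then show False using s' by simp
  qed
  then have "exit_time \<Omega> x v = ereal s" using se by simp
  then show ?thesis by simp
qed

lemma Uset_props:
  assumes "bounded \<Omega>" and U: "((x, v), s) \<in> Uset \<Omega>"
  shows "0 < s \<and> x - s *\<^sub>R v \<in> \<Omega> \<and> s * norm v \<le> diameter \<Omega>"
proof -
  have s: "0 < s" and seg: "\<And>t. t \<in> {0..1} \<Longrightarrow> x - (t * s) *\<^sub>R v \<in> \<Omega>" using U by (auto simp: Uset_def)
  have x: "x \<in> \<Omega>" using seg[of 0] by simp
  have xs: "x - s *\<^sub>R v \<in> \<Omega>" using seg[of 1] by simp
  have "dist x (x - s *\<^sub>R v) \<le> diameter \<Omega>" by (rule diameter_bounded_bound[OF assms(1) x xs])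
  then show ?thesis using s xs by (simp add: dist_norm)
qed


lemma integral_lebesgue_AE_borel:
  fixes f g :: "'a::euclidean_space \<Rightarrow> real"
  assumes g: "g \<in> borel_measurable borel" and ae: "AE x in lborel. g x = f x"
  shows "integral\<^sup>L lebesgue f = integral\<^sup>L lborel g"
proof -
  have gl: "g \<in> borel_measurable lborel" using g by simp
  have fm: "f \<in> borel_measurable lebesgue" by (rule borel_measurable_completion_AE[OF gl ae])
  have "integral\<^sup>L lebesgue f = integral\<^sup>L lebesgue g"
    by (rule integral_cong_AE[OF fm]) (use gl ae in \<open>auto intro: AE_completion measurable_completion\<close>)
  also have "\<dots> = integral\<^sup>L lborel g" by (rule integral_completion[OF gl])
  finally show ?thesis .
qed

lemma Kop_eq:
  fixes h0 k0 :: "R3 \<times> R3 \<Rightarrow> real"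
  assumes [measurable]: "h0 \<in> borel_measurable (borel \<Otimes>\<^sub>M borel)" "k0 \<in> borel_measurable (borel \<Otimes>\<^sub>M borel)"
    and kdef: "\<And>v w. v \<noteq> w \<Longrightarrow> k v w = k0 (v,w)"
    and fib: "AE w in lborel. h y w = h0 (y,w)"
  shows "Kop k h y v = (\<integral>w. k0 (v,w) * h0 (y,w) \<partial>lborel)"
  unfolding Kop_def
proof (rule integral_lebesgue_AE_borel)
  show "(\<lambda>w. k0 (v,w) * h0 (y,w)) \<in> borel_measurable borel" by measurable
  show "AE w in lborel. k0 (v,w) * h0 (y,w) = k v w * h y w"
    using fib AE_lborel_singleton[of v] by eventually_elim (auto simp: kdef)
qed

lemma Sop_eq:
  fixes F :: "R3 \<times> R3 \<Rightarrow> real" and \<nu> :: "R3 \<Rightarrow> real"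
  assumes [measurable]: "F \<in> borel_measurable (borel \<Otimes>\<^sub>M borel)" "\<nu> \<in> borel_measurable borel"
    and op: "open \<Omega>" and x: "x \<in> \<Omega>"
    and ae: "AE s in lborel. x - s *\<^sub>R v \<notin> N1"
    and Keq: "\<And>y. y \<in> \<Omega> \<Longrightarrow> y \<notin> N1 \<Longrightarrow> Kf y v = F (y, v)"
  shows "S_op \<Omega> \<nu> Kf x v = (\<integral>s. indicator (Uset \<Omega>) ((x,v),s) * exp (- \<nu> v * s) * F (x - s *\<^sub>R v, v) \<partial>lborel)"
  unfolding S_op_def set_lebesgue_integral_def
proof (rule integral_lebesgue_AE_borel)
  have [measurable]: "Uset \<Omega> \<in> sets ((borel \<Otimes>\<^sub>M borel) \<Otimes>\<^sub>M borel)" by (rule Uset_sets[OF op])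
  show "(\<lambda>s. indicator (Uset \<Omega>) ((x,v),s) * exp (- \<nu> v * s) * F (x - s *\<^sub>R v, v)) \<in> borel_measurable borel"
    by measurable
  show "AE s in lborel. indicator (Uset \<Omega>) ((x,v),s) * exp (- \<nu> v * s) * F (x - s *\<^sub>R v, v)
      = indicator {s. 0 < s \<and> ereal s < exit_time \<Omega> x v} s *\<^sub>R (exp (- \<nu> v * s) * Kf (x - s *\<^sub>R v) v)"
    using ae AE_lborel_singleton[of "real_of_ereal (exit_time \<Omega> x v)"]
  proof eventually_elim
    case (elim s)
    show ?case
    proof (cases "0 < s \<and> ereal s < exit_time \<Omega> x v")
      case True
      then have U: "((x, v), s) \<in> Uset \<Omega>" using exit_in_Uset[OF x] by auto
      then have "x - s *\<^sub>R v \<in> \<Omega>" unfolding Uset_def by (auto dest: bspec[of _ _ 1])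
      then have "Kf (x - s *\<^sub>R v) v = F (x - s *\<^sub>R v, v)" using Keq elim by auto
      then show ?thesis using True U by simp
    next
      case False
      have "((x, v), s) \<notin> Uset \<Omega>"
      proof
        assume U: "((x, v), s) \<in> Uset \<Omega>"
        then have "0 < s" by (simp add: Uset_def)
        then have "\<not> ereal s < exit_time \<Omega> x v" using False by simp
        from Uset_not_exit[OF U this] show False using elim by simp
      qed
      then show ?thesis using False by simp
    qed
  qed
qed


lemma sa_nu_borel:
  assumes sa: "structural_assms \<nu> k \<rho> \<gamma> \<nu>0 \<nu>1 C"
  shows "\<nu> \<in> borel_measurable borel"
proof -
  have "\<forall>v. \<exists>g. (\<nu> has_derivative (\<lambda>z. g \<bullet> z)) (at v)"
    using sa unfolding structural_assms_def by blast
  then have "\<And>v. isCont \<nu> v" using has_derivative_continuous by blast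
  then have "continuous_on UNIV \<nu>" by (simp add: continuous_at_imp_continuous_on)
  then show ?thesis by (rule borel_measurable_continuous_onI)
qed

lemma sa_k0:
  assumes sa: "structural_assms \<nu> k \<rho> \<gamma> \<nu>0 \<nu>1 C"
  defines "k0 \<equiv> \<lambda>p::R3 \<times> R3. if p \<in> {p. fst p \<noteq> snd p} then k (fst p) (snd p) else 0"
  shows "k0 \<in> borel_measurable (borel \<Otimes>\<^sub>M borel)"
    "\<And>v w. \<bar>k0 (v,w)\<bar> \<le> C * gk ((1 - \<rho>)/4) (v - w)"
    "\<And>v w. v \<noteq> w \<Longrightarrow> k v w = k0 (v,w)"
proof -
  have op: "open {p::R3 \<times> R3. fst p \<noteq> snd p}"
  proof -
    have "{p::R3\<times>R3. fst p \<noteq> snd p} = - {p. fst p = snd p}" by auto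
    moreover have "closed {p::R3\<times>R3. fst p = snd p}"
      by (intro closed_Collect_eq continuous_intros)
    ultimately show ?thesis by (simp add: open_Compl)
  qed
  have "k0 \<in> borel_measurable borel" unfolding k0_def
    by (rule borel_measurable_continuous_on_if[OF borel_open[OF op] sa_k_cont[OF sa] continuous_on_const])
  then show "k0 \<in> borel_measurable (borel \<Otimes>\<^sub>M borel)" by (simp only: borel_prod)
  show "\<And>v w. \<bar>k0 (v,w)\<bar> \<le> C * gk ((1 - \<rho>)/4) (v - w)"
  proof -
    fix v w :: R3
    show "\<bar>k0 (v,w)\<bar> \<le> C * gk ((1 - \<rho>)/4) (v - w)"
    proof (cases "v = w")
      case True then show ?thesis using sa_basic(6)[OF sa] by (simp add: k0_def gk_nonneg)
    next
      case False then show ?thesis using sa_k_bound[OF sa False] by (simp add: k0_def)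
    qed
  qed
  show "\<And>v w. v \<noteq> w \<Longrightarrow> k v w = k0 (v,w)" by (simp add: k0_def)
qed


lemma ennreal_prod5:
  fixes x C r1 r2 N :: real
  assumes "0 \<le> x" "0 \<le> C" "0 \<le> r1" "0 \<le> r2" "0 \<le> N"
  shows "ennreal x * ((ennreal C * ennreal r1) * ((ennreal C * (2 * ennreal r2)) * ennreal N))
    = ennreal (x * ((C * r1) * ((C * (2 * r2)) * N)))"
proof -
  have e2: "2 * ennreal r2 = ennreal (2 * r2)" using assms by (simp add: ennreal_mult)
  have e1: "ennreal C * ennreal r1 = ennreal (C * r1)" by (rule ennreal_mult[symmetric]) (use assms in auto)
  have e3: "ennreal C * ennreal (2 * r2) = ennreal (C * (2 * r2))" by (rule ennreal_mult[symmetric]) (use assms in auto)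
  have e4: "ennreal (C * (2 * r2)) * ennreal N = ennreal (C * (2 * r2) * N)" by (rule ennreal_mult[symmetric]) (use assms in auto)
  have e5: "ennreal (C * r1) * ennreal (C * (2 * r2) * N) = ennreal (C * r1 * (C * (2 * r2) * N))" by (rule ennreal_mult[symmetric]) (use assms in auto)
  have e6: "ennreal x * ennreal (C * r1 * (C * (2 * r2) * N)) = ennreal (x * (C * r1 * (C * (2 * r2) * N)))" by (rule ennreal_mult[symmetric]) (use assms in auto)
  show ?thesis by (simp only: e1 e2 e3 e4 e5 e6)
qed

lemma main_for_domain:
  fixes \<nu> :: "R3 \<Rightarrow> real" and k :: "R3 \<Rightarrow> R3 \<Rightarrow> real" and h :: "R3 \<Rightarrow> R3 \<Rightarrow> real"
  assumes sa: "structural_assms \<nu> k \<rho> \<gamma> \<nu>0 \<nu>1 C"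
    and dom: "bounded_C2_domain_pos_gauss_curv \<Omega>" and L2: "L2_on \<Omega> h"
  defines "a \<equiv> (1 - \<rho>) / 4"
  shows "L2_on \<Omega> (S_op \<Omega> \<nu> (Kop k h)) \<and>
    (\<integral>p. (case p of (x,v) \<Rightarrow> (S_op \<Omega> \<nu> (Kop k h) x v)\<^sup>2) \<partial>lebesgue_on (\<Omega> \<times> UNIV))
    \<le> diameter \<Omega> * (C\<^sup>2 * enn2real (\<integral>\<^sup>+z. ennreal (gk a z) \<partial>lborel) * (2 * enn2real (\<integral>\<^sup>+z. ennreal (g2 a z) \<partial>lborel)) / \<nu>0)
      * (\<integral>p. (case p of (x,v) \<Rightarrow> (h x v)\<^sup>2) \<partial>lebesgue_on (\<Omega> \<times> UNIV))"
proof -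
  have a: "a > 0" using sa_basic[OF sa] by (simp add: a_def)
  have C: "C > 0" and nu0: "\<nu>0 > 0" and nub: "\<And>v. \<nu>0 \<le> \<nu> v" using sa_basic[OF sa] by auto
  define I1 where "I1 = (\<integral>\<^sup>+z. ennreal (gk a z) \<partial>lborel)"
  define I2 where "I2 = (\<integral>\<^sup>+z. ennreal (g2 a z) \<partial>lborel)"
  have I1: "I1 = ennreal (enn2real I1)" using gk_int_finite[OF a] by (simp add: I1_def less_top)
  have I2: "I2 = ennreal (enn2real I2)" using g2_int_finite[OF a] by (simp add: I2_def less_top)
  define r1 where "r1 = enn2real I1"
  define r2 where "r2 = enn2real I2"
  have r: "0 \<le> r1" "0 \<le> r2" by (simp_all add: r1_def r2_def)
  define Kc where "Kc = C\<^sup>2 * r1 * (2 * r2) / \<nu>0"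
  define k0 where "k0 = (\<lambda>p::R3 \<times> R3. if p \<in> {p. fst p \<noteq> snd p} then k (fst p) (snd p) else 0)"
  have k0m[measurable]: "k0 \<in> borel_measurable (borel \<Otimes>\<^sub>M borel)"
    and kb: "\<And>v w. \<bar>k0 (v,w)\<bar> \<le> C * gk a (v - w)"
    and kdef: "\<And>v w. v \<noteq> w \<Longrightarrow> k v w = k0 (v,w)"
    unfolding k0_def a_def by (rule sa_k0[OF sa], rule sa_k0[OF sa], rule sa_k0[OF sa])
  have num[measurable]: "\<nu> \<in> borel_measurable borel" by (rule sa_nu_borel[OF sa])
  have op: "open \<Omega>" and bd: "bounded \<Omega>" using dom unfolding bounded_C2_domain_pos_gauss_curv_def by auto
  define d where "d = diameter \<Omega>"
  have d: "0 \<le> d" unfolding d_def by (rule diameter_ge_0[OF bd])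
  define S where "S = \<Omega> \<times> (UNIV :: R3 set)"
  have Sb[measurable]: "S \<in> sets borel" unfolding S_def using op by (intro borel_open open_Times) auto
  define H where "H = (\<lambda>(x,v). h x v)"
  have Hm: "H \<in> borel_measurable (lebesgue_on S)" using L2 unfolding L2_on_def H_def S_def by auto
  have Hi: "integrable (lebesgue_on S) (\<lambda>p. (H p)\<^sup>2)"
  proof -
    have "(\<lambda>(x,v). (h x v)\<^sup>2) = (\<lambda>p. (H p)\<^sup>2)" by (auto simp: H_def)
    then show ?thesis using L2 unfolding L2_on_def S_def by simp
  qed
  obtain h0 where h0b: "h0 \<in> borel_measurable borel" and h0z: "\<And>p. p \<notin> S \<Longrightarrow> h0 p = 0"
    and h0ae: "AE p in lborel. p \<in> S \<longrightarrow> H p = h0 p"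
    using borel_version[OF Sb Hm] by blast
  have h0m[measurable]: "h0 \<in> borel_measurable (borel \<Otimes>\<^sub>M borel)" using h0b by (simp only: borel_prod)
  obtain N1 where N1: "N1 \<in> null_sets lborel" and N1f: "\<And>x. x \<notin> N1 \<Longrightarrow> AE w in lborel. (x, w) \<in> S \<longrightarrow> H (x, w) = h0 (x, w)"
    using AE_fibers[OF h0ae] by blast
  define F0 where "F0 p = (\<integral>w. k0 (snd p, w) * h0 (fst p, w) \<partial>lborel)" for p :: "R3 \<times> R3"
  have F0m[measurable]: "F0 \<in> borel_measurable (borel \<Otimes>\<^sub>M borel)" unfolding F0_def by measurable
  have Keq: "Kop k h y v = F0 (y, v)" if y: "y \<in> \<Omega>" "y \<notin> N1" for y v
  proof -
    have "AE w in lborel. h y w = h0 (y,w)"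
      using N1f[OF y(2)] by eventually_elim (use y in \<open>auto simp: S_def H_def\<close>)
    then show ?thesis unfolding F0_def by (simp add: Kop_eq[OF h0m k0m kdef])
  qed
  define U where "U = Uset \<Omega>"
  have Um[measurable]: "U \<in> sets ((borel \<Otimes>\<^sub>M borel) \<Otimes>\<^sub>M borel)" unfolding U_def by (rule Uset_sets[OF op])
  define S0 where "S0 p = (\<integral>s. indicator U (p,s) * exp (- \<nu> (snd p) * s) * F0 (fst p - s *\<^sub>R snd p, snd p) \<partial>lborel)" for p
  have S0m[measurable]: "S0 \<in> borel_measurable (borel \<Otimes>\<^sub>M borel)" unfolding S0_def by measurable
  have S0b: "S0 \<in> borel_measurable borel" using S0m by (simp only: borel_prod)
  define Sop where "Sop = (\<lambda>(x,v). S_op \<Omega> \<nu> (Kop k h) x v)"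
  have aeS: "AE p in lborel. p \<in> S \<longrightarrow> Sop p = S0 p"
    using shear_null[OF N1]
  proof eventually_elim
    case (elim p)
    obtain x v where p: "p = (x, v)" by (cases p)
    show ?case
    proof
      assume "p \<in> S"
      then have x: "x \<in> \<Omega>" using p by (simp add: S_def)
      have "S_op \<Omega> \<nu> (Kop k h) x v = (\<integral>s. indicator (Uset \<Omega>) ((x,v),s) * exp (- \<nu> v * s) * F0 (x - s *\<^sub>R v, v) \<partial>lborel)"
        by (rule Sop_eq[OF F0m num op x _ Keq]) (use elim p in auto)
      then show "Sop p = S0 p" by (simp add: p Sop_def S0_def U_def)
    qed
  qed
  have Sopm: "Sop \<in> borel_measurable (lebesgue_on S)"
  proof -
    have "(\<lambda>p. indicator S p * S0 p) \<in> borel_measurable lborel" using S0b by simp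
    moreover have "AE p in lborel. indicator S p * S0 p = indicator S p *\<^sub>R Sop p"
      using aeS by eventually_elim (auto simp: indicator_def)
    ultimately have "(\<lambda>p. indicator S p *\<^sub>R Sop p) \<in> borel_measurable lebesgue"
      by (rule borel_measurable_completion_AE)
    then show ?thesis using borel_measurable_restrict_space_iff[of S lebesgue Sop] Sb by simp
  qed
  have ES: "(\<integral>\<^sup>+p. ennreal ((Sop p)\<^sup>2) \<partial>lebesgue_on S) = (\<integral>\<^sup>+p. indicator S p * ennreal ((S0 p)\<^sup>2) \<partial>lborel)"
  proof -
    have "(\<integral>\<^sup>+p. ennreal ((Sop p)\<^sup>2) \<partial>lebesgue_on S) = (\<integral>\<^sup>+p. ennreal ((Sop p)\<^sup>2) * indicator S p \<partial>lebesgue)"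
      using Sb by (intro nn_integral_restrict_space) auto
    also have "\<dots> = (\<integral>\<^sup>+p. ennreal ((Sop p)\<^sup>2) * indicator S p \<partial>lborel)"
      by (rule nn_integral_completion)
    also have "\<dots> = (\<integral>\<^sup>+p. indicator S p * ennreal ((S0 p)\<^sup>2) \<partial>lborel)"
      by (rule nn_integral_cong_AE) (use aeS in \<open>eventually_elim, auto simp: indicator_def\<close>)
    finally show ?thesis .
  qed
  have E2: "(\<integral>\<^sup>+p. indicator S p * ennreal ((S0 p)\<^sup>2) \<partial>lborel) = (\<integral>\<^sup>+v. \<integral>\<^sup>+x. indicator \<Omega> x * ennreal ((S0 (x,v))\<^sup>2) \<partial>lborel \<partial>lborel)"
  proof -
    have Sb2[measurable]: "S \<in> sets (borel \<Otimes>\<^sub>M borel)" using Sb by (simp only: borel_prod)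
    have "(\<lambda>p. indicator S p * ennreal ((S0 p)\<^sup>2)) \<in> borel_measurable (borel \<Otimes>\<^sub>M borel)"
      by measurable
    then have m: "(\<lambda>p. indicator S p * ennreal ((S0 p)\<^sup>2)) \<in> borel_measurable (lborel \<Otimes>\<^sub>M lborel)"
      by (simp add: measurable_cong_sets[OF sets_pair_measure_cong[OF sets_lborel sets_lborel] refl])
    have "(\<integral>\<^sup>+p. indicator S p * ennreal ((S0 p)\<^sup>2) \<partial>lborel) = (\<integral>\<^sup>+p. indicator S p * ennreal ((S0 p)\<^sup>2) \<partial>(lborel \<Otimes>\<^sub>M lborel))"
      by (simp add: lborel_prod)
    also have "\<dots> = (\<integral>\<^sup>+x. \<integral>\<^sup>+v. indicator S (x,v) * ennreal ((S0 (x,v))\<^sup>2) \<partial>lborel \<partial>lborel)"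
      by (rule lborel.nn_integral_fst[symmetric, OF m])
    also have "\<dots> = (\<integral>\<^sup>+v. \<integral>\<^sup>+x. indicator S (x,v) * ennreal ((S0 (x,v))\<^sup>2) \<partial>lborel \<partial>lborel)"
      by (rule lborel_pair.Fubini'[symmetric]) (use m in simp)
    also have "\<dots> = (\<integral>\<^sup>+v. \<integral>\<^sup>+x. indicator \<Omega> x * ennreal ((S0 (x,v))\<^sup>2) \<partial>lborel \<partial>lborel)"
      by (simp add: S_def indicator_def)
    finally show ?thesis .
  qed
  define NH where "NH = (\<integral>p. (H p)\<^sup>2 \<partial>lebesgue_on S)"
  have NH0: "0 \<le> NH" unfolding NH_def by simp
  have HN: "(\<integral>\<^sup>+y. \<integral>\<^sup>+w. ennreal ((h0 (y,w))\<^sup>2) \<partial>lborel \<partial>lborel) = ennreal NH"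
  proof -
    have "(\<lambda>p. ennreal ((h0 p)\<^sup>2)) \<in> borel_measurable (borel \<Otimes>\<^sub>M borel)" by measurable
    then have mh: "(\<lambda>p. ennreal ((h0 p)\<^sup>2)) \<in> borel_measurable (lborel \<Otimes>\<^sub>M lborel)"
      by (simp add: measurable_cong_sets[OF sets_pair_measure_cong[OF sets_lborel sets_lborel] refl])
    have "(\<integral>\<^sup>+y. \<integral>\<^sup>+w. ennreal ((h0 (y,w))\<^sup>2) \<partial>lborel \<partial>lborel) = (\<integral>\<^sup>+p. ennreal ((h0 p)\<^sup>2) \<partial>(lborel \<Otimes>\<^sub>M lborel))"
      by (rule lborel.nn_integral_fst[OF mh])
    also have "\<dots> = (\<integral>\<^sup>+p. ennreal ((h0 p)\<^sup>2) \<partial>lborel)" by (simp add: lborel_prod)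
    also have "\<dots> = (\<integral>\<^sup>+p. ennreal ((H p)\<^sup>2) * indicator S p \<partial>lborel)"
      by (rule nn_integral_cong_AE) (use h0ae in \<open>eventually_elim, auto simp: indicator_def h0z\<close>)
    also have "\<dots> = (\<integral>\<^sup>+p. ennreal ((H p)\<^sup>2) * indicator S p \<partial>lebesgue)"
      by (rule nn_integral_completion[symmetric])
    also have "\<dots> = (\<integral>\<^sup>+p. ennreal ((H p)\<^sup>2) \<partial>lebesgue_on S)"
      using Sb by (intro nn_integral_restrict_space[symmetric]) auto
    also have "\<dots> = ennreal NH" unfolding NH_def
      by (rule nn_integral_eq_integral[OF Hi]) simp
    finally show ?thesis .
  qed
  have \<Omega>b[measurable]: "\<Omega> \<in> sets borel" using op by (rule borel_open)
  have UP: "\<And>x v s. ((x,v),s) \<in> U \<Longrightarrow> 0 < s \<and> x - s *\<^sub>R v \<in> \<Omega> \<and> s * norm v \<le> d"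
    using Uset_props[OF bd] unfolding U_def d_def by blast
  have S0eq: "\<And>x v. S0 (x,v) = (\<integral>s. indicator U ((x,v),s) * exp (- \<nu> v * s) * (\<integral>w. k0 (v,w) * h0 (x - s *\<^sub>R v, w) \<partial>lborel) \<partial>lborel)"
    by (simp add: S0_def F0_def)
  have main: "(\<integral>\<^sup>+v. \<integral>\<^sup>+x. indicator \<Omega> x * ennreal ((S0 (x,v))\<^sup>2) \<partial>lborel \<partial>lborel)
     \<le> ennreal (d / \<nu>0) * ((ennreal C * I1) * ((ennreal C * (2 * I2)) * (\<integral>\<^sup>+y. \<integral>\<^sup>+w. ennreal ((h0 (y,w))\<^sup>2) \<partial>lborel \<partial>lborel)))"
    unfolding S0eq I1_def I2_def
    by (rule main_estimate[OF h0m k0m num Um \<Omega>b kb _ a nub nu0 UP d]) (use C in simp)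
  have num_eq: "ennreal (d / \<nu>0) * ((ennreal C * I1) * ((ennreal C * (2 * I2)) * ennreal NH)) = ennreal (d * Kc * NH)"
  proof -
    have "ennreal (d / \<nu>0) * ((ennreal C * I1) * ((ennreal C * (2 * I2)) * ennreal NH))
        = ennreal (d / \<nu>0) * ((ennreal C * ennreal r1) * ((ennreal C * (2 * ennreal r2)) * ennreal NH))"
      using I1 I2 by (simp only: r1_def[symmetric] r2_def[symmetric])
    also have "\<dots> = ennreal (d / \<nu>0 * ((C * r1) * ((C * (2 * r2)) * NH)))"
      using d nu0 C r NH0 by (intro ennreal_prod5) auto
    also have "d / \<nu>0 * ((C * r1) * ((C * (2 * r2)) * NH)) = d * Kc * NH"
      by (simp add: Kc_def power2_eq_square field_simps)
    finally show ?thesis .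
  qed
  have ESb: "(\<integral>\<^sup>+p. ennreal ((Sop p)\<^sup>2) \<partial>lebesgue_on S) \<le> ennreal (d * Kc * NH)"
    using main unfolding ES E2 HN num_eq .
  have Sop2m: "(\<lambda>p. (Sop p)\<^sup>2) \<in> borel_measurable (lebesgue_on S)" using Sopm by measurable
  have Sopi: "integrable (lebesgue_on S) (\<lambda>p. (Sop p)\<^sup>2)"
  proof (rule integrableI_bounded[OF Sop2m])
    have "(\<integral>\<^sup>+p. ennreal (norm ((Sop p)\<^sup>2)) \<partial>lebesgue_on S) = (\<integral>\<^sup>+p. ennreal ((Sop p)\<^sup>2) \<partial>lebesgue_on S)"
      by simp
    also have "\<dots> < \<infinity>" using ESb by (simp add: le_less_trans)
    finally show "(\<integral>\<^sup>+p. ennreal (norm ((Sop p)\<^sup>2)) \<partial>lebesgue_on S) < \<infinity>" .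
  qed
  have Sopint: "(\<integral>p. (Sop p)\<^sup>2 \<partial>lebesgue_on S) \<le> d * Kc * NH"
  proof -
    have "(\<integral>p. (Sop p)\<^sup>2 \<partial>lebesgue_on S) = enn2real (\<integral>\<^sup>+p. ennreal ((Sop p)\<^sup>2) \<partial>lebesgue_on S)"
      by (rule integral_eq_nn_integral[OF Sop2m]) simp
    also have "\<dots> \<le> enn2real (ennreal (d * Kc * NH))"
      by (rule enn2real_mono[OF ESb]) simp
    also have "\<dots> \<le> d * Kc * NH"
    proof -
      have "0 \<le> Kc" unfolding Kc_def using r nu0 by simp
      then show ?thesis using d NH0 by simp
    qed
    finally show ?thesis .
  qed
  have eqS: "(\<lambda>p. case p of (x,v) \<Rightarrow> (S_op \<Omega> \<nu> (Kop k h) x v)\<^sup>2) = (\<lambda>p. (Sop p)\<^sup>2)"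
    by (auto simp: Sop_def)
  have eqH: "(\<lambda>p. case p of (x,v) \<Rightarrow> (h x v)\<^sup>2) = (\<lambda>p. (H p)\<^sup>2)"
    by (auto simp: H_def)
  have L2S: "L2_on \<Omega> (S_op \<Omega> \<nu> (Kop k h))"
    unfolding L2_on_def using Sopm Sopi eqS by (simp add: Sop_def S_def)
  show ?thesis using L2S Sopint
    unfolding eqS eqH by (simp add: S_def NH_def d_def Kc_def r1_def r2_def I1_def I2_def)
qed

theorem lemma1p3:
  fixes \<nu> :: "R3 \<Rightarrow> real" and k :: "R3 \<Rightarrow> R3 \<Rightarrow> real"
    and \<rho> \<gamma> \<nu>0 \<nu>1 C :: real
  assumes "structural_assms \<nu> k \<rho> \<gamma> \<nu>0 \<nu>1 C"
  shows "\<exists>c>0. \<forall>\<Omega> h. bounded_C2_domain_pos_gauss_curv \<Omega> \<longrightarrow> L2_on \<Omega> h \<longrightarrow>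
           L2_on \<Omega> (S_op \<Omega> \<nu> (Kop k h)) \<and>
           L2_norm_on \<Omega> (S_op \<Omega> \<nu> (Kop k h)) \<le> c * sqrt (diameter \<Omega>) * L2_norm_on \<Omega> h"
proof -
  define a where "a = (1 - \<rho>) / 4"
  define Kc where "Kc = C\<^sup>2 * enn2real (\<integral>\<^sup>+z. ennreal (gk a z) \<partial>lborel) * (2 * enn2real (\<integral>\<^sup>+z. ennreal (g2 a z) \<partial>lborel)) / \<nu>0"
  have nu0: "0 < \<nu>0" using sa_basic[OF assms] by auto
  have Kc0: "0 \<le> Kc" unfolding Kc_def using nu0 by simp
  show ?thesis
  proof (intro exI[of _ "sqrt Kc + 1"] conjI allI impI)
    show "0 < sqrt Kc + 1" using Kc0 by (simp add: add_nonneg_pos)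
    fix \<Omega> h assume dom: "bounded_C2_domain_pos_gauss_curv \<Omega>" and L2: "L2_on \<Omega> h"
    note M = main_for_domain[OF assms dom L2]
    show "L2_on \<Omega> (S_op \<Omega> \<nu> (Kop k h))" using M by simp
    have bd: "bounded \<Omega>" using dom unfolding bounded_C2_domain_pos_gauss_curv_def by auto
    define d where "d = diameter \<Omega>"
    have d: "0 \<le> d" unfolding d_def by (rule diameter_ge_0[OF bd])
    define IS where "IS = (\<integral>p. (case p of (x,v) \<Rightarrow> (S_op \<Omega> \<nu> (Kop k h) x v)\<^sup>2) \<partial>lebesgue_on (\<Omega> \<times> UNIV))"
    define NH where "NH = (\<integral>p. (case p of (x,v) \<Rightarrow> (h x v)\<^sup>2) \<partial>lebesgue_on (\<Omega> \<times> (UNIV :: R3 set)))"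
    have NH0: "0 \<le> NH" unfolding NH_def by (intro integral_nonneg_AE AE_I2) (auto split: prod.splits)
    have IS: "IS \<le> d * Kc * NH" using conjunct2[OF M] unfolding IS_def NH_def d_def Kc_def a_def by simp
    have "sqrt IS \<le> sqrt (d * Kc * NH)" using IS by simp
    also have "\<dots> = sqrt Kc * (sqrt d * sqrt NH)" by (simp add: real_sqrt_mult)
    also have "\<dots> \<le> (sqrt Kc + 1) * (sqrt d * sqrt NH)"
      by (intro mult_right_mono) (use d NH0 in auto)
    finally show "L2_norm_on \<Omega> (S_op \<Omega> \<nu> (Kop k h)) \<le> (sqrt Kc + 1) * sqrt (diameter \<Omega>) * L2_norm_on \<Omega> h"
      unfolding L2_norm_on_def IS_def NH_def d_def by (simp add: mult.assoc)
  qed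
qed


end
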